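(* Let $\Gamma\subset\mathrm{SL}_2(\mathbb{R})$ be a Fuchsian group acting freely and properly discontinuously on $\mathbb{H}$. The map $D$ takes every grouplike element of $\mathbb{C}\langle\langle M^\vee\rangle\rangle$ to an element of the group $\mathbb{D}_0=\exp(\mathfrak{d}_0^\rho)$.
   Context: Fix a basis $\mathcal{B}$ of the weight-graded space $\mathrm{M}(\Gamma)$ of modular forms for $\Gamma$, with weight-$k$ part $\mathcal{B}_k$ containing a basis of the weight-$k$ cusp forms; let $h_1,\dots,h_n\in\mathcal{B}_4$ be the basis of the weight-4 cusp forms $\mathrm{S}_4(\Gamma)$. Let $M_k^\vee$ be the dual of the weight-$k$ modular forms, with basis symbols $A_h$, $h\in\mathcal{B}_k$. Let $V_{k-2}$ be the space of polynomials of degree $\le k-2$ (in a variable, later evaluated at $\tau$), and $M^\vee=\bigoplus_{k\ge0}M_k^\vee\otimes V_{k-2}$. $\mathbb{C}\langle\langle M^\vee\rangle\rangle$ is the completed tensor algebra on $M^\vee$ (non-commutative formal power series), with completed coproduct $\Delta$ for which every element $v$ of $M^\vee$ is primitive, $\Delta v=v\otimes1+1\otimes v$; $S$ is grouplike if $\Delta S=S\otimes S$ and $S$ has constant term $1$. The map $D$ is the continuous linear map $\mathbb{C}\langle\langle M^\vee\rangle\rangle\to\mathbb{C}[\tau,\partial_\tau][[\rho_1,\dots,\rho_n]]$ (with commuting $\rho_i$) sending $1\mapsto1$ and a word $(A_{g_1}\otimes p_1)\cdots(A_{g_r}\otimes p_r)$ to $\rho_{i_1}\cdots\rho_{i_r}\,(p_1(\tau)\partial_\tau)\cdots(p_r(\tau)\partial_\tau)$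 (product of differential operators) if each $g_s=h_{i_s}$ is one of the weight-4 cusp forms $h_1,\dots,h_n$, and to $0$ otherwise. $\mathfrak{d}_0=\{p(\tau)\partial_\tau : p\in\mathbb{C}[\tau],\deg p\le2\}$ with commutator bracket, $\mathfrak{d}_0^\rho=(\rho)\mathfrak{d}_0[[\rho_1,\dots,\rho_n]]$ where $(\rho)$ is the ideal generated by the $\rho_i$, and $\mathbb{D}_0=\exp(\mathfrak{d}_0^\rho)$ inside the invertible power series in $\rho$ with coefficients in differential operators. *)

theory Defs
  imports "HOL-Computational_Algebra.Polynomial" "HOL-Library.Multiset"
begin

text \<open>Letters of the alphabet of M-dual: a letter (g, j) stands for the basis
  element A_g \<otimes> \<tau>^j of M_k^dual \<otimes> V_{k-2}, where g is a basis element of weight k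
  (given by wt) and 0 \<le> j \<le> k - 2.  A series in the completed tensor algebra is a
  coefficient function on words in these letters.\<close>

definition valid_letter :: "('b \<Rightarrow> nat) \<Rightarrow> 'b set \<Rightarrow> 'b \<times> nat \<Rightarrow> bool" where
  "valid_letter wt B a \<longleftrightarrow> fst a \<in> B \<and> 2 \<le> wt (fst a) \<and> snd a \<le> wt (fst a) - 2"

definition in_series_algebra :: "('b \<Rightarrow> nat) \<Rightarrow> 'b set \<Rightarrow> (('b \<times> nat) list \<Rightarrow> complex) \<Rightarrow> bool" where
  "in_series_algebra wt B S \<longleftrightarrow> (\<forall>w. \<not> list_all (valid_letter wt B) w \<longrightarrow> S w = 0)"

definition shuffle_mult :: "'a list \<Rightarrow> 'a list \<Rightarrow> 'a list \<Rightarrow> nat" where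
  "shuffle_mult u v w = card {I. I \<subseteq> {..<length w} \<and> card I = length u \<and>
       nths w I = u \<and> nths w ({..<length w} - I) = v}"

text \<open>Completed coproduct (letters primitive): coefficient of u \<otimes> v in \<Delta> S.\<close>
definition coproduct :: "('a list \<Rightarrow> complex) \<Rightarrow> ('a list \<times> 'a list \<Rightarrow> complex)" where
  "coproduct S = (\<lambda>(u, v). \<Sum>w\<in>shuffles u v. S w * of_nat (shuffle_mult u v w))"

definition grouplike :: "('a list \<Rightarrow> complex) \<Rightarrow> bool" where
  "grouplike S \<longleftrightarrow> S [] = 1 \<and> coproduct S = (\<lambda>(u, v). S u * S v)"

text \<open>Differential operators in C[\<tau>, \<partial>_\<tau>] are represented by their (faithful) action
  on C[\<tau>]; the product of operators is composition.\<close>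
type_synonym dop = "complex poly \<Rightarrow> complex poly"

definition letter_op :: "nat \<Rightarrow> dop" where
  "letter_op j = (\<lambda>q. monom 1 j * pderiv q)"

definition word_op :: "nat list \<Rightarrow> dop" where
  "word_op js = foldr (\<lambda>j f. letter_op j \<circ> f) js id"

text \<open>Power series in commuting \<rho>_0, ..., \<rho>_{n-1}: functions from monomials
  (multisets of indices) to differential operators.\<close>
type_synonym psD = "nat multiset \<Rightarrow> dop"

definition Dmap :: "nat \<Rightarrow> (nat \<Rightarrow> 'b) \<Rightarrow> (('b \<times> nat) list \<Rightarrow> complex) \<Rightarrow> psD" where
  "Dmap n h S = (\<lambda>m q. \<Sum>iw\<in>{iw. set iw \<subseteq> {..<n} \<times> {..2} \<and> mset (map fst iw) = m}.
      smult (S (map (\<lambda>(i, j). (h i, j)) iw)) (word_op (map snd iw) q))"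

definition d0 :: "dop set" where
  "d0 = {f. \<exists>p. degree p \<le> 2 \<and> f = (\<lambda>q. p * pderiv q)}"

definition d0rho :: "nat \<Rightarrow> psD set" where
  "d0rho n = {X. X {#} = (\<lambda>q. 0) \<and> (\<forall>m. X m \<in> d0) \<and>
                 (\<forall>m. \<not> set_mset m \<subseteq> {..<n} \<longrightarrow> X m = (\<lambda>q. 0))}"

definition ps_one :: psD where
  "ps_one = (\<lambda>m. if m = {#} then id else (\<lambda>q. 0))"

definition ps_mult :: "psD \<Rightarrow> psD \<Rightarrow> psD" where
  "ps_mult A B = (\<lambda>m q. \<Sum>m1\<in>{m1. m1 \<subseteq># m}. A m1 (B (m - m1) q))"

primrec ps_pow :: "psD \<Rightarrow> nat \<Rightarrow> psD" where
  "ps_pow X 0 = ps_one"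
| "ps_pow X (Suc k) = ps_mult X (ps_pow X k)"

text \<open>exp of a series without constant term: X^k has no monomials of degree < k,
  so the coefficient at m only involves k \<le> size m.\<close>
definition ps_exp :: "psD \<Rightarrow> psD" where
  "ps_exp X = (\<lambda>m q. \<Sum>k\<le>size m. smult (1 / fact k) (ps_pow X k m q))"

definition D0 :: "nat \<Rightarrow> psD set" where
  "D0 n = ps_exp ` d0rho n"

end

theory Submission
  imports Defs
begin


definition subs :: "'a multiset \<Rightarrow> 'a multiset set" where "subs m = {a. a \<subseteq># m}"

lemma subs_add_mset: "subs (add_mset x m) \<subseteq> subs m \<union> add_mset x ` subs m"
  unfolding subs_def
proof
  fix a assume "a \<in> {a. a \<subseteq># add_mset x m}"
  hence a: "a \<subseteq># add_mset x m" by simp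
  show "a \<in> {a. a \<subseteq># m} \<union> add_mset x ` {a. a \<subseteq># m}"
  proof (cases "x \<in># a")
    case True
    then obtain b where b: "a = add_mset x b" using multi_member_split[OF True] by blast
    with a have "b \<subseteq># m" by simp
    with b show ?thesis by auto
  next
    case False
    have "a \<subseteq># m"
      unfolding subseteq_mset_def
    proof
      fix y show "count a y \<le> count m y"
      proof (cases "y = x")
        case True then show ?thesis using False by (simp add: not_in_iff)
      next
        case False then show ?thesis using a mset_subset_eq_count[OF a, of y] by simp
      qed
    qed
    then show ?thesis by auto
  qed
qed

lemma finite_subs[simp]: "finite (subs m)"
proof (induction m)
  case empty
  then show ?case by (simp add: subs_def)
next
  case (add x m)
  show ?case by (rule finite_subset[OF subs_add_mset]) (use add.IH in auto)
qed

lemma sum_subs_subs: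
  "(\<Sum>b\<in>subs m. \<Sum>a\<in>subs (m - b). F b a) = (\<Sum>(b,a)\<in>{(b,a). b + a \<subseteq># m}. F b a)"
proof -
  have "(\<Sum>b\<in>subs m. \<Sum>a\<in>subs (m - b). F b a) = (\<Sum>(b,a)\<in>Sigma (subs m) (\<lambda>b. subs (m - b)). F b a)"
    by (rule sum.Sigma) auto
  also have "Sigma (subs m) (\<lambda>b. subs (m - b)) = {(b,a). b + a \<subseteq># m}"
  proof (intro set_eqI iffI)
    fix x assume "x \<in> Sigma (subs m) (\<lambda>b. subs (m - b))"
    then show "x \<in> {(b,a). b + a \<subseteq># m}"
      by (auto simp: subs_def subset_mset.le_diff_conv2 add.commute)
  next
    fix x assume "x \<in> {(b,a). b + a \<subseteq># m}"
    then obtain b a where x: "x = (b,a)" and ba: "b + a \<subseteq># m" by auto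
    have "b \<subseteq># m" using ba mset_subset_eq_add_left subset_mset.order_trans by blast
    moreover have "a \<subseteq># m - b" using ba \<open>b \<subseteq># m\<close> by (simp add: subset_mset.le_diff_conv2 add.commute)
    ultimately show "x \<in> Sigma (subs m) (\<lambda>b. subs (m - b))" using x by (simp add: subs_def)
  qed
  finally show ?thesis .
qed

lemma sum_subs_swap:
  "(\<Sum>b\<in>subs m. \<Sum>a\<in>subs (m - b). F b a) = (\<Sum>a\<in>subs m. \<Sum>b\<in>subs (m - a). F b a)"
proof -
  have "(\<Sum>(b,a)\<in>{(b,a). b + a \<subseteq># m}. F b a) = (\<Sum>(a,b)\<in>{(a,b). a + b \<subseteq># m}. F b a)"
  proof (rule sum.reindex_bij_witness[where i="\<lambda>(a,b). (b,a)" and j="\<lambda>(a,b). (b,a)"])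
    fix x assume "x \<in> {(b,a). b + a \<subseteq># m}"
    then obtain b a where x: "x = (b,a)" and ba: "b + a \<subseteq># m" by auto
    have "a + b = b + a" by (rule add.commute)
    then show "(case x of (a, b) \<Rightarrow> (b, a)) \<in> {(a, b). a + b \<subseteq># m}" using x ba by (simp add: add.commute)
    show "(case case x of (a, b) \<Rightarrow> (b, a) of (a, b) \<Rightarrow> (b, a)) = x" using x by simp
    show "(case case x of (a, b) \<Rightarrow> (b, a) of (a, b) \<Rightarrow> F b a) = (case x of (b, a) \<Rightarrow> F b a)" using x by simp
  next
    fix y assume "y \<in> {(a,b). a + b \<subseteq># m}"
    then obtain b a where y: "y = (a,b)" and ba: "a + b \<subseteq># m" by auto
    have "a + b = b + a" by (rule add.commute)
    then show "(case y of (a, b) \<Rightarrow> (b, a)) \<in> {(b, a). b + a \<subseteq># m}" using y ba by (simp add: add.commute)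
    show "(case case y of (a, b) \<Rightarrow> (b, a) of (a, b) \<Rightarrow> (b, a)) = y" using y by simp
  qed
  then show ?thesis by (simp add: sum_subs_subs)
qed

lemma sum_subs_assoc:
  "(\<Sum>c\<in>subs m. \<Sum>b\<in>subs c. F b (c - b)) = (\<Sum>b\<in>subs m. \<Sum>a\<in>subs (m - b). F b a)"
proof -
  have "(\<Sum>c\<in>subs m. \<Sum>b\<in>subs c. F b (c - b)) = (\<Sum>(c,b)\<in>Sigma (subs m) subs. F b (c - b))"
    by (rule sum.Sigma) auto
  also have "\<dots> = (\<Sum>(b,a)\<in>{(b,a). b + a \<subseteq># m}. F b a)"
  proof (rule sum.reindex_bij_witness[where i="\<lambda>(b,a). (b + a, b)" and j="\<lambda>(c,b). (b, c - b)"])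
    fix x assume "x \<in> Sigma (subs m) subs"
    then obtain c b where x: "x = (c,b)" and c: "c \<subseteq># m" and b: "b \<subseteq># c" by (auto simp: subs_def)
    have e: "b + (c - b) = c" using b by (rule subset_mset.add_diff_inverse)
    show "(case case x of (c, b) \<Rightarrow> (b, c - b) of (b, a) \<Rightarrow> (b + a, b)) = x" using x e by simp
    show "(case x of (c, b) \<Rightarrow> (b, c - b)) \<in> {(b, a). b + a \<subseteq># m}" using x e c by simp
    show "(case case x of (c, b) \<Rightarrow> (b, c - b) of (b, a) \<Rightarrow> F b a) = (case x of (c, b) \<Rightarrow> F b (c - b))"
      using x by simp
  next
    fix y assume "y \<in> {(b, a). b + a \<subseteq># m}"
    then obtain b a where y: "y = (b,a)" and ba: "b + a \<subseteq># m" by auto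
    show "(case case y of (b, a) \<Rightarrow> (b + a, b) of (c, b) \<Rightarrow> (b, c - b)) = y" using y by simp
    show "(case y of (b, a) \<Rightarrow> (b + a, b)) \<in> Sigma (subs m) subs" using y ba by (simp add: subs_def)
  qed
  finally show ?thesis by (simp add: sum_subs_subs)
qed



type_synonym 'r ser = "nat multiset \<Rightarrow> 'r \<Rightarrow> 'r"

definition gone :: "'r::zero ser" where "gone = (\<lambda>m. if m = {#} then id else (\<lambda>q. 0))"

definition gmult :: "'r::comm_monoid_add ser \<Rightarrow> 'r ser \<Rightarrow> 'r ser" where
  "gmult A B = (\<lambda>m q. \<Sum>m1\<in>{m1. m1 \<subseteq># m}. A m1 (B (m - m1) q))"

primrec gpow :: "'r::comm_monoid_add ser \<Rightarrow> nat \<Rightarrow> 'r ser" where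
  "gpow X 0 = gone"
| "gpow X (Suc k) = gmult X (gpow X k)"

definition gexp :: "(complex \<Rightarrow> 'r) \<Rightarrow> 'r::comm_ring_1 ser \<Rightarrow> 'r ser" where
  "gexp \<kappa> X = (\<lambda>m q. \<Sum>k\<le>size m. \<kappa> (1 / fact k) * gpow X k m q)"

definition addv :: "('r::ab_group_add \<Rightarrow> 'r) \<Rightarrow> bool" where
  "addv F \<longleftrightarrow> (\<forall>x y. F (x + y) = F x + F y)"

definition der :: "('r::comm_ring_1 \<Rightarrow> 'r) \<Rightarrow> bool" where
  "der F \<longleftrightarrow> addv F \<and> (\<forall>x y. F (x * y) = F x * y + x * F y)"

definition klin :: "(complex \<Rightarrow> 'r) \<Rightarrow> ('r::comm_ring_1 \<Rightarrow> 'r) \<Rightarrow> bool" where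
  "klin \<kappa> F \<longleftrightarrow> (\<forall>c x. F (\<kappa> c * x) = \<kappa> c * F x)"

definition khom :: "(complex \<Rightarrow> 'r::comm_ring_1) \<Rightarrow> bool" where
  "khom \<kappa> \<longleftrightarrow> (\<forall>a b. \<kappa> (a + b) = \<kappa> a + \<kappa> b) \<and> (\<forall>a b. \<kappa> (a * b) = \<kappa> a * \<kappa> b) \<and> \<kappa> 1 = 1"

lemma gmult_subs: "gmult A B m q = (\<Sum>m1\<in>subs m. A m1 (B (m - m1) q))"
  by (simp add: gmult_def subs_def)

lemma addv_0: "addv F \<Longrightarrow> F 0 = 0"
  unfolding addv_def by (metis add_cancel_right_right)

lemma addv_minus: "addv F \<Longrightarrow> F (- x) = - F x"
  unfolding addv_def by (metis addv_0 addv_def add.right_inverse add_eq_0_iff)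

lemma addv_diff: "addv F \<Longrightarrow> F (x - y) = F x - F y"
  using addv_minus[of F y] unfolding addv_def by (metis diff_conv_add_uminus)

lemma addv_sum: "addv F \<Longrightarrow> F (sum g S) = (\<Sum>s\<in>S. F (g s))"
proof (induction S rule: infinite_finite_induct)
  case (infinite A) then show ?case by (simp add: addv_0)
next
  case empty then show ?case by (simp add: addv_0)
next
  case (insert x F') then show ?case by (simp add: addv_def)
qed

lemma addv_of_nat: "addv F \<Longrightarrow> F (of_nat n * x) = of_nat n * F x"
  by (induction n) (auto simp: addv_0 addv_def algebra_simps)

lemma addv_diffI: "addv F \<Longrightarrow> addv G \<Longrightarrow> addv (\<lambda>q. F q - G q)"
  unfolding addv_def by (simp add: algebra_simps)

lemma klin_diffI: "klin \<kappa> F \<Longrightarrow> klin \<kappa> G \<Longrightarrow> klin \<kappa> (\<lambda>q. F q - G q)"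
  unfolding klin_def by (simp add: algebra_simps)

lemma addv_sumI: "finite S \<Longrightarrow> (\<And>s. s \<in> S \<Longrightarrow> addv (F s)) \<Longrightarrow> addv (\<lambda>q. \<Sum>s\<in>S. F s q)"
  unfolding addv_def by (simp add: sum.distrib)

lemma addv_comp: "addv F \<Longrightarrow> addv G \<Longrightarrow> addv (F \<circ> G)"
  unfolding addv_def by simp

lemma addv_gmult:
  assumes "\<And>m. addv (A m)" "\<And>m. addv (B m)"
  shows "addv (gmult A B m)"
  unfolding gmult_subs addv_def
  using assms by (simp add: addv_def sum.distrib)

lemma addv_gone: "addv (gone m :: 'r::ab_group_add \<Rightarrow> 'r)"
  by (simp add: gone_def addv_def)

lemma addv_gpow: "(\<And>m. addv (X m)) \<Longrightarrow> addv (gpow X k m)"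
proof (induction k arbitrary: m)
  case 0 then show ?case by (simp add: addv_gone)
next
  case (Suc k) then show ?case by (simp add: addv_gmult)
qed

lemma addv_gexp: "(\<And>m. addv (X m)) \<Longrightarrow> addv (gexp \<kappa> X m)"
  unfolding gexp_def addv_def
  using addv_gpow[of X] by (simp add: addv_def sum.distrib algebra_simps)

lemma klin_gmult:
  assumes "khom \<kappa>" "\<And>m. klin \<kappa> (A m)" "\<And>m. klin \<kappa> (B m)"
  shows "klin \<kappa> (gmult A B m)"
  using assms unfolding klin_def gmult_subs by (simp add: sum_distrib_left)

lemma klin_gpow:
  assumes "khom \<kappa>" "\<And>m. klin \<kappa> (X m)"
  shows "klin \<kappa> (gpow X k m)"
proof (induction k arbitrary: m)
  case 0 then show ?case by (simp add: gone_def klin_def)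
next
  case (Suc k) then show ?case using assms by (simp add: klin_gmult)
qed

lemma klin_gexp:
  assumes "khom \<kappa>" "\<And>m. klin \<kappa> (X m)"
  shows "klin \<kappa> (gexp \<kappa> X m)"
  using klin_gpow[OF assms] unfolding klin_def gexp_def by (simp add: sum_distrib_left algebra_simps)

lemma gpow_low:
  assumes X0: "X {#} = (\<lambda>q. 0)" and Xa: "\<And>m. addv (X m)"
  shows "size m < k \<Longrightarrow> gpow X k m q = 0"
proof (induction k arbitrary: m q)
  case 0 then show ?case by simp
next
  case (Suc k)
  have "gpow X (Suc k) m q = (\<Sum>m1\<in>subs m. X m1 (gpow X k (m - m1) q))"
    by (simp add: gmult_subs)
  also have "\<dots> = (\<Sum>m1\<in>subs m. 0)"
  proof (rule sum.cong[OF refl])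
    fix m1 assume m1: "m1 \<in> subs m"
    show "X m1 (gpow X k (m - m1) q) = 0"
    proof (cases "m1 = {#}")
      case True then show ?thesis using X0 by simp
    next
      case False
      then have "size m1 > 0" by (simp add: nonempty_has_size)
      moreover have "size (m - m1) = size m - size m1" using m1 by (simp add: subs_def size_Diff_submset)
      moreover have "size m1 \<le> size m" using m1 by (simp add: subs_def size_mset_mono)
      ultimately have "size (m - m1) < k" using Suc.prems by arith
      then show ?thesis using Suc.IH addv_0[OF Xa] by simp
    qed
  qed
  finally show ?case by simp
qed



lemma subs_size_eq: "a \<subseteq># m \<Longrightarrow> size a = size m \<Longrightarrow> a = m"
  using mset_subset_size subset_mset.le_neq_trans by fastforce

lemma subs_diff_empty: "a \<subseteq># m \<Longrightarrow> (m - a = {#}) = (a = m)"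
  by (metis cancel_comm_monoid_add_class.diff_cancel subset_mset.add_diff_inverse add_0_right)

lemma size_diff_subs: "a \<in> subs m \<Longrightarrow> size (m - a) = size m - size a"
  by (simp add: subs_def size_Diff_submset)

lemma size_subs: "a \<in> subs m \<Longrightarrow> size a \<le> size m"
  by (simp add: subs_def size_mset_mono)

lemma gmult_gone_right:
  assumes "\<And>m. addv (A m)"
  shows "gmult A gone m q = A m q"
proof -
  have "gmult A gone m q = (\<Sum>a\<in>subs m. if a = m then A m q else 0)"
    unfolding gmult_subs
  proof (rule sum.cong[OF refl])
    fix a assume a: "a \<in> subs m"
    then have "a \<subseteq># m" by (simp add: subs_def)
    then show "A a (gone (m - a) q) = (if a = m then A m q else 0)"
      using addv_0[OF assms] by (auto simp: gone_def subs_diff_empty)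
  qed
  also have "\<dots> = A m q" by (simp add: sum.delta[OF finite_subs]) (simp add: subs_def)
  finally show ?thesis .
qed

lemma gmult_gone_left:
  shows "gmult gone B m q = (B m q :: 'r::comm_monoid_add)"
proof -
  have "gmult gone B m q = (\<Sum>a\<in>subs m. if a = {#} then B m q else 0)"
    unfolding gmult_subs
    by (rule sum.cong[OF refl]) (auto simp: gone_def)
  also have "\<dots> = B m q" by (simp add: sum.delta'[OF finite_subs]) (simp add: subs_def)
  finally show ?thesis .
qed

lemma gpow_1: "(\<And>m. addv (X m)) \<Longrightarrow> gpow X 1 m q = X m q"
  by (simp add: gmult_gone_right)

lemma khom_simps:
  assumes "khom \<kappa>"
  shows "\<kappa> 1 = 1" "\<kappa> (a + b) = \<kappa> a + \<kappa> b" "\<kappa> (a * b) = \<kappa> a * \<kappa> b" "\<kappa> 0 = 0"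
  using assms unfolding khom_def by (auto, metis add_cancel_right_right add_0)

lemma gexp_empty: "khom \<kappa> \<Longrightarrow> gexp \<kappa> X {#} q = q"
  by (simp add: gexp_def gone_def khom_simps)

definition trunc :: "nat \<Rightarrow> 'r::zero ser \<Rightarrow> 'r ser" where
  "trunc s Y = (\<lambda>m. if size m < s then Y m else (\<lambda>q. 0))"

lemma gpow_local:
  assumes Y0: "Y {#} = (\<lambda>q. 0)" and Y'0: "Y' {#} = (\<lambda>q. 0)"
    and Ya: "\<And>m. addv (Y m)" and Y'a: "\<And>m. addv (Y' m)"
    and agree: "\<And>m'. size m' < s \<Longrightarrow> Y m' = Y' m'"
  shows "size m < s \<or> (size m \<le> s \<and> k \<noteq> 1) \<Longrightarrow> gpow Y k m = gpow Y' k m"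
proof (induction k arbitrary: m)
  case 0 then show ?case by simp
next
  case (Suc k)
  have ms: "size m \<le> s" using Suc.prems by auto
  show ?case
  proof (rule ext)
    fix q
    show "gpow Y (Suc k) m q = gpow Y' (Suc k) m q"
      unfolding gpow.simps gmult_subs
    proof (rule sum.cong[OF refl])
      fix a assume a: "a \<in> subs m"
      show "Y a (gpow Y k (m - a) q) = Y' a (gpow Y' k (m - a) q)"
      proof (cases "a = {#}")
        case True then show ?thesis using Y0 Y'0 by simp
      next
        case False
        then have pos: "size a > 0" by (simp add: nonempty_has_size)
        have sd: "size (m - a) = size m - size a" using a by (rule size_diff_subs)
        have sa: "size a \<le> size m" using a by (rule size_subs)
        show ?thesis
        proof (cases "size a < s")
          case True
          have "size (m - a) < s" using sd pos sa ms by arith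
          then have "gpow Y k (m - a) = gpow Y' k (m - a)" using Suc.IH by blast
          then show ?thesis using agree[OF True] by simp
        next
          case False
          then have "size a = size m" "size m = s" using sa ms by arith+
          then have am: "a = m" using subs_size_eq[of a m] a by (simp add: subs_def)
          with \<open>size m = s\<close> Suc.prems have "k \<noteq> 0" by auto
          then have "gpow Y k (m - a) q = 0" "gpow Y' k (m - a) q = 0"
            using gpow_low[where X=Y, OF Y0 Ya] gpow_low[where X=Y', OF Y'0 Y'a] am by auto
          then show ?thesis using addv_0[OF Ya] addv_0[OF Y'a] by simp
        qed
      qed
    qed
  qed
qed

lemma gexp_split:
  assumes k: "khom \<kappa>" and Y0: "Y {#} = (\<lambda>q. 0)" and Ya: "\<And>m. addv (Y m)"
  shows "gexp \<kappa> Y m q = Y m q + gexp \<kappa> (trunc (size m) Y) m q"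
proof -
  let ?Y' = "trunc (size m) Y"
  have Y'0: "?Y' {#} = (\<lambda>q. 0)" using Y0 by (simp add: trunc_def)
  have Y'a: "addv (?Y' m')" for m' using Ya by (simp add: trunc_def addv_def)
  have agree: "size m' < size m \<Longrightarrow> Y m' = ?Y' m'" for m' by (simp add: trunc_def)
  have "gexp \<kappa> Y m q - gexp \<kappa> ?Y' m q = (\<Sum>k\<le>size m. \<kappa> (1 / fact k) * (gpow Y k m q - gpow ?Y' k m q))"
    by (simp add: gexp_def sum_subtractf algebra_simps)
  also have "\<dots> = (\<Sum>k\<le>size m. if k = 1 then Y m q else 0)"
  proof (rule sum.cong[OF refl])
    fix k assume "k \<in> {..size m}"
    show "\<kappa> (1 / fact k) * (gpow Y k m q - gpow ?Y' k m q) = (if k = 1 then Y m q else 0)"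
    proof (cases "k = 1")
      case True
      have "?Y' m q = 0" by (simp add: trunc_def)
      then show ?thesis using True gpow_1[OF Ya] gpow_1[OF Y'a] khom_simps[OF k] by simp
    next
      case False
      then have "gpow Y k m = gpow ?Y' k m"
        using gpow_local[where Y=Y and Y'="?Y'" and s="size m", OF Y0 Y'0 Ya Y'a agree] by blast
      then show ?thesis using False by simp
    qed
  qed
  also have "\<dots> = Y m q"
    using Y0 by (cases "m = {#}") (auto simp: nonempty_has_size Suc_le_eq)
  finally show ?thesis by (simp add: algebra_simps)
qed

primrec gX :: "(complex \<Rightarrow> 'r::comm_ring_1) \<Rightarrow> 'r ser \<Rightarrow> nat \<Rightarrow> 'r ser" where
  "gX \<kappa> G 0 = (\<lambda>m q. 0)"
| "gX \<kappa> G (Suc k) = (\<lambda>m. if size m = k then (\<lambda>q. G m q - gexp \<kappa> (gX \<kappa> G k) m q) else gX \<kappa> G k m)"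

definition Xfin :: "(complex \<Rightarrow> 'r::comm_ring_1) \<Rightarrow> 'r ser \<Rightarrow> 'r ser" where
  "Xfin \<kappa> G m = gX \<kappa> G (Suc (size m)) m"

lemma gX_high: "k \<le> size m \<Longrightarrow> gX \<kappa> G k m = (\<lambda>q. 0)"
  by (induction k) auto

lemma gX_low: "size m < k \<Longrightarrow> gX \<kappa> G k m = Xfin \<kappa> G m"
proof (induction k)
  case 0 then show ?case by simp
next
  case (Suc k)
  show ?case
  proof (cases "size m = k")
    case True then show ?thesis by (simp add: Xfin_def)
  next
    case False then show ?thesis using Suc by simp
  qed
qed

lemma gX_trunc: "gX \<kappa> G k = trunc k (Xfin \<kappa> G)"
  by (rule ext) (simp add: trunc_def gX_low gX_high)

lemma Xfin_eq: "Xfin \<kappa> G m = (\<lambda>q. G m q - gexp \<kappa> (gX \<kappa> G (size m)) m q)"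
  by (simp add: Xfin_def)

lemma gX_add: "(\<And>m. addv (G m)) \<Longrightarrow> addv (gX \<kappa> G k m)"
proof (induction k arbitrary: m)
  case 0 then show ?case by (simp add: addv_def)
next
  case (Suc k)
  have "addv (gexp \<kappa> (gX \<kappa> G k) m)" using Suc by (simp add: addv_gexp)
  then show ?case using Suc by (simp add: addv_diffI)
qed

lemma Xfin_add: "(\<And>m. addv (G m)) \<Longrightarrow> addv (Xfin \<kappa> G m)"
  unfolding Xfin_def by (rule gX_add)

lemma gX_klin: "khom \<kappa> \<Longrightarrow> (\<And>m. klin \<kappa> (G m)) \<Longrightarrow> klin \<kappa> (gX \<kappa> G k m)"
proof (induction k arbitrary: m)
  case 0 then show ?case by (simp add: klin_def)
next
  case (Suc k)
  have "klin \<kappa> (gexp \<kappa> (gX \<kappa> G k) m)" using Suc by (simp add: klin_gexp)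
  then show ?case using Suc by (simp add: klin_diffI)
qed

lemma Xfin_klin: "khom \<kappa> \<Longrightarrow> (\<And>m. klin \<kappa> (G m)) \<Longrightarrow> klin \<kappa> (Xfin \<kappa> G m)"
  unfolding Xfin_def by (rule gX_klin)

lemma Xfin_empty: "khom \<kappa> \<Longrightarrow> G {#} = id \<Longrightarrow> Xfin \<kappa> G {#} = (\<lambda>q. 0)"
  by (simp add: Xfin_eq gexp_empty)

lemma gexp_Xfin:
  assumes k: "khom \<kappa>" and G0: "G {#} = id" and Ga: "\<And>m. addv (G m)"
  shows "gexp \<kappa> (Xfin \<kappa> G) m q = G m q"
proof -
  have "gexp \<kappa> (Xfin \<kappa> G) m q = Xfin \<kappa> G m q + gexp \<kappa> (trunc (size m) (Xfin \<kappa> G)) m q"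
    by (rule gexp_split[where Y="Xfin \<kappa> G", OF k Xfin_empty[where G=G, OF k G0] Xfin_add[where G=G, OF Ga]])
  also have "\<dots> = G m q" by (simp add: Xfin_eq gX_trunc)
  finally show ?thesis .
qed



lemma pascal_sum:
  fixes W :: "nat \<Rightarrow> nat \<Rightarrow> 'a::comm_semiring_1"
  shows "(\<Sum>i\<le>Suc k. of_nat (Suc k choose i) * W i (Suc k - i))
       = (\<Sum>i\<le>k. of_nat (k choose i) * (W (Suc i) (k - i) + W i (Suc k - i)))"
proof -
  have A: "(\<Sum>i\<le>Suc k. of_nat (Suc k choose i) * W i (Suc k - i))
      = W 0 (Suc k) + (\<Sum>i\<le>k. of_nat (k choose i) * W (Suc i) (k - i))
          + (\<Sum>i\<le>k. of_nat (k choose Suc i) * W (Suc i) (k - i))"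
    by (subst sum.atMost_Suc_shift) (simp add: algebra_simps sum.distrib)
  have B: "(\<Sum>i\<le>Suc k. of_nat (k choose i) * W i (Suc k - i))
      = W 0 (Suc k) + (\<Sum>i\<le>k. of_nat (k choose Suc i) * W (Suc i) (k - i))"
    by (subst sum.atMost_Suc_shift) simp
  have C: "(\<Sum>i\<le>Suc k. of_nat (k choose i) * W i (Suc k - i))
      = (\<Sum>i\<le>k. of_nat (k choose i) * W i (Suc k - i))"
    by (simp add: binomial_eq_0)
  have D: "(\<Sum>i\<le>k. of_nat (k choose i) * W i (Suc k - i))
      = W 0 (Suc k) + (\<Sum>i\<le>k. of_nat (k choose Suc i) * W (Suc i) (k - i))"
    using B by (simp only: C)
  have "(\<Sum>i\<le>k. of_nat (k choose i) * (W (Suc i) (k - i) + W i (Suc k - i)))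
     = (\<Sum>i\<le>k. of_nat (k choose i) * W (Suc i) (k - i)) + (\<Sum>i\<le>k. of_nat (k choose i) * W i (Suc k - i))"
    by (simp only: distrib_left sum.distrib)
  also have "\<dots> = (\<Sum>i\<le>k. of_nat (k choose i) * W (Suc i) (k - i)) + (W 0 (Suc k) + (\<Sum>i\<le>k. of_nat (k choose Suc i) * W (Suc i) (k - i)))"
    by (simp only: D)
  finally show ?thesis unfolding A by (simp only: add_ac)
qed

lemma der_addv: "der F \<Longrightarrow> addv F" by (simp add: der_def)
lemma der_mult: "der F \<Longrightarrow> F (x * y) = F x * y + x * F y" by (simp add: der_def)

lemma gpow_leib:
  fixes Y :: "'r::comm_ring_1 ser" and f g :: 'r
  assumes Yd: "\<And>m. der (Y m)"
  defines "W \<equiv> (\<lambda>m i j. \<Sum>a\<in>subs m. gpow Y i a f * gpow Y j (m - a) g)"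
  shows "gpow Y k m (f * g) = (\<Sum>i\<le>k. of_nat (k choose i) * W m i (k - i))"
proof (induction k arbitrary: m)
  case 0
  have "W m 0 0 = (\<Sum>a\<in>subs m. if a = {#} then f * gone m g else 0)"
    unfolding W_def by (rule sum.cong[OF refl]) (auto simp: gone_def)
  also have "\<dots> = f * gone m g" by (simp add: sum.delta'[OF finite_subs]) (simp add: subs_def)
  also have "\<dots> = gone m (f * g)" by (simp add: gone_def)
  finally show ?case by simp
next
  case (Suc k)
  let ?P = "gpow Y"
  have Ya: "addv (Y m)" for m using Yd by (simp add: der_def)
  have "?P (Suc k) m (f * g) = (\<Sum>b\<in>subs m. Y b (?P k (m - b) (f * g)))"
    by (simp add: gmult_subs)
  also have "\<dots> = (\<Sum>b\<in>subs m. \<Sum>i\<le>k. of_nat (k choose i) *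
       (\<Sum>a\<in>subs (m - b). Y b (?P i a f) * ?P (k - i) (m - b - a) g
                          + ?P i a f * Y b (?P (k - i) (m - b - a) g)))"
  proof (rule sum.cong[OF refl])
    fix b
    show "Y b (?P k (m - b) (f * g)) = (\<Sum>i\<le>k. of_nat (k choose i) *
       (\<Sum>a\<in>subs (m - b). Y b (?P i a f) * ?P (k - i) (m - b - a) g
                          + ?P i a f * Y b (?P (k - i) (m - b - a) g)))"
      unfolding Suc.IH W_def
      apply (simp only: addv_sum[OF Ya] addv_of_nat[OF Ya])
      apply (simp only: der_mult[OF Yd])
      done
  qed
  also have "\<dots> = (\<Sum>i\<le>k. of_nat (k choose i) *
       ((\<Sum>b\<in>subs m. \<Sum>a\<in>subs (m - b). Y b (?P i a f) * ?P (k - i) (m - b - a) g)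
      + (\<Sum>b\<in>subs m. \<Sum>a\<in>subs (m - b). ?P i a f * Y b (?P (k - i) (m - b - a) g))))"
    by (subst sum.swap) (simp add: sum_distrib_left sum.distrib ring_distribs)
  also have "\<dots> = (\<Sum>i\<le>k. of_nat (k choose i) * (W m (Suc i) (k - i) + W m i (Suc k - i)))"
  proof (rule sum.cong[OF refl])
    fix i assume i: "i \<in> {..k}"
    have U: "(\<Sum>b\<in>subs m. \<Sum>a\<in>subs (m - b). Y b (?P i a f) * ?P (k - i) (m - b - a) g) = W m (Suc i) (k - i)"
    proof -
      have "W m (Suc i) (k - i) = (\<Sum>c\<in>subs m. \<Sum>b\<in>subs c. Y b (?P i (c - b) f) * ?P (k - i) (m - c) g)"
        unfolding W_def by (simp add: gmult_subs sum_distrib_right)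
      also have "\<dots> = (\<Sum>c\<in>subs m. \<Sum>b\<in>subs c. Y b (?P i (c - b) f) * ?P (k - i) (m - (b + (c - b))) g)"
        by (intro sum.cong refl) (simp add: subs_def subset_mset.add_diff_inverse)
      also have "\<dots> = (\<Sum>b\<in>subs m. \<Sum>a\<in>subs (m - b). Y b (?P i a f) * ?P (k - i) (m - (b + a)) g)"
        by (rule sum_subs_assoc[where F="\<lambda>b a. Y b (?P i a f) * ?P (k - i) (m - (b + a)) g"])
      finally show ?thesis by simp
    qed
    have V: "(\<Sum>b\<in>subs m. \<Sum>a\<in>subs (m - b). ?P i a f * Y b (?P (k - i) (m - b - a) g)) = W m i (Suc k - i)"
    proof -
      have "(\<Sum>b\<in>subs m. \<Sum>a\<in>subs (m - b). ?P i a f * Y b (?P (k - i) (m - b - a) g))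
          = (\<Sum>a\<in>subs m. \<Sum>b\<in>subs (m - a). ?P i a f * Y b (?P (k - i) (m - (b + a)) g))"
        using sum_subs_swap[where F="\<lambda>b a. ?P i a f * Y b (?P (k - i) (m - (b + a)) g)"] by simp
      also have "\<dots> = (\<Sum>a\<in>subs m. ?P i a f * ?P (Suc (k - i)) (m - a) g)"
        by (simp add: gmult_subs sum_distrib_left add.commute)
      finally show ?thesis using i unfolding W_def by (simp add: Suc_diff_le)
    qed
    show "of_nat (k choose i) * ((\<Sum>b\<in>subs m. \<Sum>a\<in>subs (m - b). Y b (?P i a f) * ?P (k - i) (m - b - a) g)
      + (\<Sum>b\<in>subs m. \<Sum>a\<in>subs (m - b). ?P i a f * Y b (?P (k - i) (m - b - a) g)))
      = of_nat (k choose i) * (W m (Suc i) (k - i) + W m i (Suc k - i))"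
      using U V by simp
  qed
  also have "\<dots> = (\<Sum>i\<le>Suc k. of_nat (Suc k choose i) * W m i (Suc k - i))"
    by (rule pascal_sum[symmetric])
  finally show ?case .
qed



lemma kappa_of_nat: "khom \<kappa> \<Longrightarrow> \<kappa> (of_nat n) = of_nat n"
  by (induction n) (simp_all add: khom_simps)

lemma kappa_coef:
  assumes k: "khom \<kappa>" and ik: "i \<le> j"
  shows "\<kappa> (1 / fact j) * of_nat (j choose i) = \<kappa> (1 / fact i) * \<kappa> (1 / fact (j - i))"
proof -
  have e: "(1 / fact j) * (of_nat (j choose i) :: complex) = (1 / fact i) * (1 / fact (j - i))"
    using binomial_fact[OF ik, where 'a=complex] by (simp add: field_simps)
  have "\<kappa> (1 / fact j) * of_nat (j choose i) = \<kappa> (1 / fact j) * \<kappa> (of_nat (j choose i))"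
    by (simp add: kappa_of_nat k)
  also have "\<dots> = \<kappa> ((1 / fact j) * of_nat (j choose i))" by (simp only: khom_simps(3)[OF k])
  also have "\<dots> = \<kappa> ((1 / fact i) * (1 / fact (j - i)))" by (simp only: e)
  also have "\<dots> = \<kappa> (1 / fact i) * \<kappa> (1 / fact (j - i))" by (simp only: khom_simps(3)[OF k])
  finally show ?thesis .
qed

lemma finite_tri: "finite {(i,j). i + j \<le> (n::nat)}"
  by (rule finite_subset[of _ "{..n} \<times> {..n}"]) auto

lemma gexp_mult:
  fixes Y :: "'r::comm_ring_1 ser"
  assumes k: "khom \<kappa>" and Y0: "Y {#} = (\<lambda>q. 0)" and Yd: "\<And>m. der (Y m)"
  shows "gexp \<kappa> Y m (f * g) = (\<Sum>a\<in>subs m. gexp \<kappa> Y a f * gexp \<kappa> Y (m - a) g)"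
proof -
  have Ya: "\<And>m. addv (Y m)" using Yd by (simp add: der_def)
  define T where "T = (\<lambda>a i j. \<kappa> (1 / fact i) * \<kappa> (1 / fact j) * (gpow Y i a f * gpow Y j (m - a) g))"
  define W where "W = (\<lambda>i j. \<Sum>a\<in>subs m. gpow Y i a f * gpow Y j (m - a) g)"
  let ?n = "size m"
  have "gexp \<kappa> Y m (f * g) = (\<Sum>j\<le>?n. \<kappa> (1 / fact j) * (\<Sum>i\<le>j. of_nat (j choose i) * W i (j - i)))"
    unfolding gexp_def W_def by (simp add: gpow_leib[OF Yd])
  also have "\<dots> = (\<Sum>j\<le>?n. \<Sum>i\<le>j. \<kappa> (1 / fact i) * \<kappa> (1 / fact (j - i)) * W i (j - i))"
  proof (intro sum.cong refl)
    fix j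
    show "\<kappa> (1 / fact j) * (\<Sum>i\<le>j. of_nat (j choose i) * W i (j - i))
        = (\<Sum>i\<le>j. \<kappa> (1 / fact i) * \<kappa> (1 / fact (j - i)) * W i (j - i))"
      unfolding sum_distrib_left
    proof (intro sum.cong refl)
      fix i assume "i \<in> {..j}"
      then have "i \<le> j" by simp
      then show "\<kappa> (1 / fact j) * (of_nat (j choose i) * W i (j - i)) = \<kappa> (1 / fact i) * \<kappa> (1 / fact (j - i)) * W i (j - i)"
        using kappa_coef[OF k, of i j] by (simp add: mult.assoc[symmetric])
    qed
  qed
  also have "\<dots> = (\<Sum>(i,j)\<in>{(i,j). i + j \<le> ?n}. \<kappa> (1 / fact i) * \<kappa> (1 / fact j) * W i j)"
    by (rule sum.triangle_reindex_eq[symmetric])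
  also have "\<dots> = (\<Sum>(i,j)\<in>{(i,j). i + j \<le> ?n}. \<Sum>a\<in>subs m. T a i j)"
    unfolding W_def T_def by (simp add: sum_distrib_left case_prod_unfold mult.assoc)
  also have "\<dots> = (\<Sum>a\<in>subs m. \<Sum>(i,j)\<in>{(i,j). i + j \<le> ?n}. T a i j)"
    unfolding case_prod_unfold by (rule sum.swap)
  also have "\<dots> = (\<Sum>a\<in>subs m. \<Sum>(i,j)\<in>{..size a} \<times> {..size (m - a)}. T a i j)"
  proof (rule sum.cong[OF refl])
    fix a assume a: "a \<in> subs m"
    have sz: "size a + size (m - a) = ?n" using size_diff_subs[OF a] size_subs[OF a] by simp
    show "(\<Sum>(i,j)\<in>{(i,j). i + j \<le> ?n}. T a i j) = (\<Sum>(i,j)\<in>{..size a} \<times> {..size (m - a)}. T a i j)"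
    proof (rule sum.mono_neutral_right[OF finite_tri])
      show "{..size a} \<times> {..size (m - a)} \<subseteq> {(i, j). i + j \<le> ?n}" using sz by auto
      show "\<forall>x\<in>{(i, j). i + j \<le> ?n} - {..size a} \<times> {..size (m - a)}. (case x of (i, j) \<Rightarrow> T a i j) = 0"
      proof
        fix x assume "x \<in> {(i, j). i + j \<le> ?n} - {..size a} \<times> {..size (m - a)}"
        then obtain i j where x: "x = (i,j)" and nr: "\<not> (i \<le> size a \<and> j \<le> size (m - a))" by auto
        then have "i > size a \<or> j > size (m - a)" by auto
        then have "gpow Y i a f = 0 \<or> gpow Y j (m - a) g = 0"
          using gpow_low[where X=Y, OF Y0 Ya] by blast
        then show "(case x of (i, j) \<Rightarrow> T a i j) = 0" using x by (auto simp: T_def)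
      qed
    qed
  qed
  also have "\<dots> = (\<Sum>a\<in>subs m. gexp \<kappa> Y a f * gexp \<kappa> Y (m - a) g)"
  proof (rule sum.cong[OF refl])
    fix a
    show "(\<Sum>(i,j)\<in>{..size a} \<times> {..size (m - a)}. T a i j) = gexp \<kappa> Y a f * gexp \<kappa> Y (m - a) g"
      unfolding gexp_def sum_product T_def
      by (simp add: sum.cartesian_product[symmetric] algebra_simps)
  qed
  finally show ?thesis .
qed



definition mob :: "'r::comm_ring_1 \<Rightarrow> 'r \<Rightarrow> ('r \<Rightarrow> 'r) \<Rightarrow> bool" where
  "mob N Dn Q \<longleftrightarrow> Q N * Dn = N * Q Dn"

lemma mob_comp:
  fixes Y Q :: "'r::idom \<Rightarrow> 'r"
  assumes Dn: "Dn \<noteq> 0" and Yd: "der Y" and Ym: "mob N Dn Y" and Qm: "mob N Dn Q"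
  shows "mob N Dn (\<lambda>q. Y (Q q))"
proof -
  have q: "Q N * Dn = N * Q Dn" and y: "Y N * Dn = N * Y Dn" using Ym Qm by (auto simp: mob_def)
  have "Y (Q N * Dn) = Y (N * Q Dn)" using q by simp
  then have 1: "Y (Q N) * Dn + Q N * Y Dn = Y N * Q Dn + N * Y (Q Dn)" using der_mult[OF Yd] by simp
  have "Q N * Y Dn * Dn = Y N * Q Dn * Dn"
  proof -
    have "Q N * Y Dn * Dn = (Q N * Dn) * Y Dn" by (simp add: algebra_simps)
    also have "\<dots> = N * Q Dn * Y Dn" using q by simp
    also have "\<dots> = (Y N * Dn) * Q Dn" using y by (simp add: algebra_simps)
    finally show ?thesis by (simp add: algebra_simps)
  qed
  then have "Q N * Y Dn = Y N * Q Dn" using Dn by simp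
  with 1 show ?thesis unfolding mob_def by simp
qed

lemma mob_sum: "(\<And>s. s \<in> S \<Longrightarrow> mob N Dn (F s)) \<Longrightarrow> mob N Dn (\<lambda>q. \<Sum>s\<in>S. F s q)"
  unfolding mob_def by (simp add: sum_distrib_left sum_distrib_right)

lemma mob_cmul: "mob N Dn F \<Longrightarrow> mob N Dn (\<lambda>q. c * F q)"
  unfolding mob_def by (metis mult.assoc mult.left_commute)

lemma mob_diff: "mob N Dn F \<Longrightarrow> mob N Dn G \<Longrightarrow> mob N Dn (\<lambda>q. F q - G q)"
  unfolding mob_def by (simp add: algebra_simps)

lemma mob_gone: "mob N Dn (gone m)"
  unfolding mob_def gone_def by simp

lemma mob_gpow:
  fixes Y :: "'r::idom ser"
  assumes Dn: "Dn \<noteq> 0" and Yd: "\<And>m. der (Y m)" and Ym: "\<And>m. mob N Dn (Y m)"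
  shows "mob N Dn (gpow Y k m)"
proof (induction k arbitrary: m)
  case 0 then show ?case by (simp add: mob_gone)
next
  case (Suc k)
  show ?case unfolding gpow.simps gmult_subs
    by (rule mob_sum[where F="\<lambda>a q. Y a (gpow Y k (m - a) q)"], rule mob_comp[OF Dn Yd Ym Suc.IH])
qed

lemma mob_gexp:
  fixes Y :: "'r::idom ser"
  assumes Dn: "Dn \<noteq> 0" and Yd: "\<And>m. der (Y m)" and Ym: "\<And>m. mob N Dn (Y m)"
  shows "mob N Dn (gexp \<kappa> Y m)"
  unfolding gexp_def
  by (rule mob_sum[where F="\<lambda>k q. \<kappa> (1 / fact k) * gpow Y k m q"], rule mob_cmul, rule mob_gpow[OF Dn Yd Ym])

lemma der_zero: "der (\<lambda>q. 0 :: 'r::comm_ring_1)"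
  by (simp add: der_def addv_def)

lemma mob_zero: "mob N Dn (\<lambda>q. 0)"
  by (simp add: mob_def)

lemma core:
  fixes G :: "'r::idom ser"
  assumes k: "khom \<kappa>" and G0: "G {#} = id" and Ga: "\<And>m. addv (G m)"
    and Gmul: "\<And>m f g. G m (f * g) = (\<Sum>a\<in>subs m. G a f * G (m - a) g)"
    and GM: "\<And>m. mob N Dn (G m)" and Dn: "Dn \<noteq> 0"
  shows "der (Xfin \<kappa> G m) \<and> mob N Dn (Xfin \<kappa> G m)"
proof (induction "size m" arbitrary: m rule: less_induct)
  case less
  let ?s = "size m"
  let ?Y = "gX \<kappa> G ?s"
  let ?E = "gexp \<kappa> ?Y"
  have X0: "Xfin \<kappa> G {#} = (\<lambda>q. 0)" by (rule Xfin_empty[where G=G, OF k G0])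
  have Ytr: "?Y = trunc ?s (Xfin \<kappa> G)" by (rule gX_trunc)
  have Y0: "?Y {#} = (\<lambda>q. 0)" using X0 by (simp add: Ytr trunc_def)
  have Yprop: "der (?Y m') \<and> mob N Dn (?Y m')" for m'
  proof (cases "size m' < ?s")
    case True then show ?thesis using less by (simp add: Ytr trunc_def)
  next
    case False then show ?thesis by (simp add: Ytr trunc_def der_zero mob_zero)
  qed
  have Yd: "der (?Y m')" for m' using Yprop by blast
  have Ym: "mob N Dn (?Y m')" for m' using Yprop by blast
  have Ya: "addv (?Y m')" for m' using Yd by (simp add: der_def)
  have Xa: "addv (Xfin \<kappa> G m')" for m' by (rule Xfin_add[where G=G, OF Ga])
  have EG: "?E m' = G m'" if "size m' < ?s" for m'
  proof -
    have "gpow ?Y j m' = gpow (Xfin \<kappa> G) j m'" for j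
      by (rule gpow_local[where s="?s" and Y="?Y" and Y'="Xfin \<kappa> G", OF Y0 X0 Ya Xa]) (use that in \<open>auto simp: Ytr trunc_def\<close>)
    then have "?E m' = gexp \<kappa> (Xfin \<kappa> G) m'" by (simp add: gexp_def)
    then show ?thesis using gexp_Xfin[where G=G, OF k G0 Ga] by auto
  qed
  have E0: "?E {#} = id" using gexp_empty[OF k] by auto
  have Emul: "?E m (f * g) = (\<Sum>a\<in>subs m. ?E a f * ?E (m - a) g)" for f g
    by (rule gexp_mult[where Y="?Y", OF k Y0 Yd])
  have Xm: "Xfin \<kappa> G m = (\<lambda>q. G m q - ?E m q)" by (rule Xfin_eq)
  have mobX: "mob N Dn (Xfin \<kappa> G m)"
    unfolding Xm by (rule mob_diff[OF GM mob_gexp[OF Dn Yd Ym]])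
  have derX: "der (Xfin \<kappa> G m)"
  proof (cases "m = {#}")
    case True then show ?thesis using X0 der_zero by simp
  next
    case False
    have "Xfin \<kappa> G m (f * g) = Xfin \<kappa> G m f * g + f * Xfin \<kappa> G m g" for f g
    proof -
      define D where "D = (\<lambda>a. G a f * G (m - a) g - ?E a f * ?E (m - a) g)"
      have "Xfin \<kappa> G m (f * g) = (\<Sum>a\<in>subs m. D a)"
        unfolding Xm D_def Gmul Emul by (simp add: sum_subtractf)
      also have "\<dots> = (\<Sum>a\<in>{{#}, m}. D a)"
      proof (rule sum.mono_neutral_right)
        show "{{#}, m} \<subseteq> subs m" by (auto simp: subs_def)
        show "\<forall>a\<in>subs m - {{#}, m}. D a = 0"
        proof
          fix a assume a: "a \<in> subs m - {{#}, m}"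
          then have am: "a \<in> subs m" "a \<noteq> {#}" "a \<noteq> m" by auto
          have "size a \<noteq> ?s" using am subs_size_eq[of a m] by (auto simp: subs_def)
          then have "size a < ?s" using size_subs[OF am(1)] by linarith
          moreover have "size (m - a) < ?s"
            using am size_diff_subs[of a m] size_subs[of a m] by (simp add: nonempty_has_size)
          ultimately show "D a = 0" unfolding D_def using EG by simp
        qed
      qed simp
      also have "\<dots> = D {#} + D m" using False by simp
      also have "\<dots> = Xfin \<kappa> G m f * g + f * Xfin \<kappa> G m g"
        unfolding D_def Xm using G0 E0 by (simp add: algebra_simps)
      finally show ?thesis .
    qed
    then show ?thesis using Xa by (simp add: der_def)
  qed
  show ?case using derX mobX by blast
qed



lemma nths_Cons_compl:
  "{j. Suc j \<in> {..<Suc n} - I} = {..<n} - {j. Suc j \<in> I}"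
  by auto

lemma mset_nths_split:
  "mset (nths w I) + mset (nths w ({..<length w} - I)) = mset w"
proof (induction w arbitrary: I)
  case Nil then show ?case by simp
next
  case (Cons x w)
  have "{j. Suc j \<in> {..<length (x # w)} - I} = {..<length w} - {j. Suc j \<in> I}" by auto
  then show ?case using Cons.IH[of "{j. Suc j \<in> I}"] by (simp add: nths_Cons)
qed

lemma nths_shuffles:
  "nths w I = u \<Longrightarrow> nths w ({..<length w} - I) = v \<Longrightarrow> w \<in> shuffles u v"
proof (induction w arbitrary: I u v)
  case Nil then show ?case by simp
next
  case (Cons x w)
  let ?I = "{j. Suc j \<in> I}"
  have c: "{j. Suc j \<in> {..<length (x # w)} - I} = {..<length w} - ?I" by auto
  show ?case
  proof (cases "0 \<in> I")
    case True
    then have u: "u = x # nths w ?I" and v: "v = nths w ({..<length w} - ?I)"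
      using Cons.prems c by (auto simp: nths_Cons)
    have "w \<in> shuffles (nths w ?I) v" using Cons.IH[of ?I] v by simp
    then show ?thesis using u by (simp add: Cons_in_shuffles_leftI)
  next
    case False
    then have u: "u = nths w ?I" and v: "v = x # nths w ({..<length w} - ?I)"
      using Cons.prems c by (auto simp: nths_Cons)
    have "w \<in> shuffles u (nths w ({..<length w} - ?I))" using Cons.IH[of ?I] u by simp
    then show ?thesis using v by (simp add: Cons_in_shuffles_rightI)
  qed
qed

lemma mset_shuffles: "w \<in> shuffles u v \<Longrightarrow> mset w = mset u + mset v"
  by (induction u v arbitrary: w rule: shuffles.induct) auto

lemma shuffles_map: "shuffles (map f u) (map f v) = map f ` shuffles u v"
  by (induction u v rule: shuffles.induct) (auto simp: image_Un image_image)

lemma length_nths_sub: "I \<subseteq> {..<length w} \<Longrightarrow> length (nths w I) = card I"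
proof -
  assume "I \<subseteq> {..<length w}"
  then have "{i. i < length w \<and> i \<in> I} = I" by auto
  then show ?thesis by (simp add: length_nths)
qed

definition gword :: "(nat \<Rightarrow> 'r \<Rightarrow> 'r) \<Rightarrow> nat list \<Rightarrow> 'r \<Rightarrow> 'r" where
  "gword L js = foldr (\<lambda>j f. L j \<circ> f) js id"

lemma gword_Nil[simp]: "gword L [] = id" by (simp add: gword_def)
lemma gword_Cons[simp]: "gword L (j # js) = L j \<circ> gword L js" by (simp add: gword_def)

lemma word_op_gword: "word_op = gword letter_op"
  by (rule ext) (simp add: word_op_def gword_def)

lemma Pow_lessThan_Suc:
  "Pow {..<Suc n} = (\<lambda>I. insert 0 (Suc ` I)) ` Pow {..<n} \<union> (\<lambda>I. Suc ` I) ` Pow {..<n}"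
proof (intro set_eqI iffI)
  fix J assume J: "J \<in> Pow {..<Suc n}"
  let ?I = "{j. Suc j \<in> J}"
  have I: "?I \<in> Pow {..<n}" using J by auto
  show "J \<in> (\<lambda>I. insert 0 (Suc ` I)) ` Pow {..<n} \<union> (\<lambda>I. Suc ` I) ` Pow {..<n}"
  proof (cases "0 \<in> J")
    case True
    have "J = insert 0 (Suc ` ?I)"
      using True by (auto simp: image_iff) (metis not0_implies_Suc)
    then show ?thesis using I by blast
  next
    case False
    have "J = Suc ` ?I"
      using False by (auto simp: image_iff) (metis not0_implies_Suc)
    then show ?thesis using I by blast
  qed
qed auto

lemma inj_insert0_Suc: "inj_on (\<lambda>I. insert 0 (Suc ` I)) X"
proof (rule inj_onI)
  fix I J assume "insert 0 (Suc ` I) = insert (0::nat) (Suc ` J)"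
  then have "{k. Suc k \<in> insert 0 (Suc ` I)} = {k. Suc k \<in> insert 0 (Suc ` J)}" by simp
  moreover have "{k. Suc k \<in> insert 0 (Suc ` I)} = I" "{k. Suc k \<in> insert 0 (Suc ` J)} = J" by auto
  ultimately show "I = J" by simp
qed

lemma inj_Suc_img: "inj_on (\<lambda>I. Suc ` I) X"
  by (simp add: inj_on_def inj_image_eq_iff)

lemma gword_leib:
  fixes L :: "nat \<Rightarrow> 'r::comm_ring_1 \<Rightarrow> 'r"
  assumes Ld: "\<And>j. der (L j)"
  shows "gword L js (f * g) = (\<Sum>I\<in>Pow {..<length js}. gword L (nths js I) f * gword L (nths js ({..<length js} - I)) g)"
proof (induction js)
  case Nil then show ?case by simp
next
  case (Cons j js)
  let ?n = "length js"
  let ?A = "\<lambda>I. gword L (nths js I) f"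
  let ?B = "\<lambda>I. gword L (nths js ({..<?n} - I)) g"
  let ?F = "\<lambda>J. gword L (nths (j # js) J) f * gword L (nths (j # js) ({..<Suc ?n} - J)) g"
  have La: "addv (L j)" using Ld by (simp add: der_def)
  have "gword L (j # js) (f * g) = L j (\<Sum>I\<in>Pow {..<?n}. ?A I * ?B I)" using Cons by simp
  also have "\<dots> = (\<Sum>I\<in>Pow {..<?n}. L j (?A I) * ?B I) + (\<Sum>I\<in>Pow {..<?n}. ?A I * L j (?B I))"
    by (simp add: addv_sum[OF La] der_mult[OF Ld] sum.distrib)
  also have "(\<Sum>I\<in>Pow {..<?n}. L j (?A I) * ?B I) = (\<Sum>I\<in>Pow {..<?n}. ?F (insert 0 (Suc ` I)))"
  proof (rule sum.cong[OF refl])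
    fix I assume I: "I \<in> Pow {..<?n}"
    have 1: "{k. Suc k \<in> insert 0 (Suc ` I)} = I" by auto
    have 2: "{k. Suc k \<in> {..<Suc ?n} - insert 0 (Suc ` I)} = {..<?n} - I" by auto
    show "L j (?A I) * ?B I = ?F (insert 0 (Suc ` I))" unfolding nths_Cons 1 2 by simp
  qed
  also have "\<dots> = sum ?F ((\<lambda>I. insert 0 (Suc ` I)) ` Pow {..<?n})"
    by (simp add: sum.reindex[OF inj_insert0_Suc])
  also have "(\<Sum>I\<in>Pow {..<?n}. ?A I * L j (?B I)) = (\<Sum>I\<in>Pow {..<?n}. ?F (Suc ` I))"
  proof (rule sum.cong[OF refl])
    fix I assume I: "I \<in> Pow {..<?n}"
    have 1: "{k. Suc k \<in> Suc ` I} = I" by auto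
    have 2: "{k. Suc k \<in> {..<Suc ?n} - Suc ` I} = {..<?n} - I" by auto
    have 3: "0 \<in> {..<Suc ?n} - Suc ` I" by auto
    show "?A I * L j (?B I) = ?F (Suc ` I)" unfolding nths_Cons 1 2 using 3 by simp
  qed
  also have "\<dots> = sum ?F ((\<lambda>I. Suc ` I) ` Pow {..<?n})"
    by (simp add: sum.reindex[OF inj_Suc_img])
  also have "sum ?F ((\<lambda>I. insert 0 (Suc ` I)) ` Pow {..<?n}) + sum ?F ((\<lambda>I. Suc ` I) ` Pow {..<?n})
      = sum ?F (Pow {..<Suc ?n})"
    unfolding Pow_lessThan_Suc by (rule sum.union_disjoint[symmetric]) auto
  finally show ?case by simp
qed



definition Wd :: "nat \<Rightarrow> nat multiset \<Rightarrow> (nat \<times> nat) list set" where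
  "Wd n m = {iw. set iw \<subseteq> {..<n} \<times> {..2} \<and> mset (map fst iw) = m}"

definition Gs :: "(complex \<Rightarrow> 'r::comm_ring_1) \<Rightarrow> (nat \<Rightarrow> 'r \<Rightarrow> 'r) \<Rightarrow> nat \<Rightarrow> ((nat \<times> nat) list \<Rightarrow> complex) \<Rightarrow> 'r ser" where
  "Gs \<kappa> L n T m q = (\<Sum>iw\<in>Wd n m. \<kappa> (T iw) * gword L (map snd iw) q)"

definition Jset :: "'a list \<Rightarrow> 'a list \<Rightarrow> 'a list \<Rightarrow> nat set set" where
  "Jset u v w = {I. I \<subseteq> {..<length w} \<and> card I = length u \<and> nths w I = u \<and> nths w ({..<length w} - I) = v}"

lemma shuffle_mult_Jset: "shuffle_mult u v w = card (Jset u v w)"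
  by (simp add: shuffle_mult_def Jset_def)

lemma finite_Jset[simp]: "finite (Jset u v w)"
  by (rule finite_subset[of _ "Pow {..<length w}"]) (auto simp: Jset_def)

lemma finite_Wd[simp]: "finite (Wd n m)"
proof (rule finite_subset)
  show "Wd n m \<subseteq> {xs. set xs \<subseteq> {..<n} \<times> {..2} \<and> length xs = size m}"
    by (auto simp: Wd_def dest: arg_cong[where f=size])
  show "finite {xs. set xs \<subseteq> {..<n} \<times> {..2::nat} \<and> length xs = size m}"
    by (rule finite_lists_length_eq) simp
qed

lemma kappa_sum: "khom \<kappa> \<Longrightarrow> \<kappa> (sum f S) = (\<Sum>s\<in>S. \<kappa> (f s))"
  by (induction S rule: infinite_finite_induct) (simp_all add: khom_simps)

lemma sum_Sigma5:
  assumes "finite A" "\<And>a. finite (B a)" "\<And>a u. finite (C a u)" "\<And>a u v. finite (D a u v)"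
    "\<And>a u v w. finite (E a u v w)"
  shows "(\<Sum>a\<in>A. \<Sum>u\<in>B a. \<Sum>v\<in>C a u. \<Sum>w\<in>D a u v. \<Sum>I\<in>E a u v w. F a u v w I)
    = (\<Sum>(a,u,v,w,I)\<in>Sigma A (\<lambda>a. Sigma (B a) (\<lambda>u. Sigma (C a u) (\<lambda>v. Sigma (D a u v) (E a u v)))). F a u v w I)"
proof -
  have 1: "(\<Sum>w\<in>D a u v. \<Sum>I\<in>E a u v w. F a u v w I) = (\<Sum>(w,I)\<in>Sigma (D a u v) (E a u v). F a u v w I)" for a u v
    by (rule sum.Sigma) (use assms in auto)
  have 2: "(\<Sum>v\<in>C a u. \<Sum>(w,I)\<in>Sigma (D a u v) (E a u v). F a u v w I)
      = (\<Sum>(v,w,I)\<in>Sigma (C a u) (\<lambda>v. Sigma (D a u v) (E a u v)). F a u v w I)" for a u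
    by (subst sum.Sigma) (use assms in \<open>auto simp: case_prod_unfold\<close>)
  have 3: "(\<Sum>u\<in>B a. \<Sum>(v,w,I)\<in>Sigma (C a u) (\<lambda>v. Sigma (D a u v) (E a u v)). F a u v w I)
      = (\<Sum>(u,v,w,I)\<in>Sigma (B a) (\<lambda>u. Sigma (C a u) (\<lambda>v. Sigma (D a u v) (E a u v))). F a u v w I)" for a
    by (subst sum.Sigma) (use assms in \<open>auto simp: case_prod_unfold\<close>)
  have 4: "(\<Sum>a\<in>A. \<Sum>(u,v,w,I)\<in>Sigma (B a) (\<lambda>u. Sigma (C a u) (\<lambda>v. Sigma (D a u v) (E a u v))). F a u v w I)
      = (\<Sum>(a,u,v,w,I)\<in>Sigma A (\<lambda>a. Sigma (B a) (\<lambda>u. Sigma (C a u) (\<lambda>v. Sigma (D a u v) (E a u v)))). F a u v w I)"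
    by (subst sum.Sigma) (use assms in \<open>auto simp: case_prod_unfold\<close>)
  show ?thesis by (simp only: 1 2 3 4)
qed

lemma Gs_mult:
  fixes L :: "nat \<Rightarrow> 'r::comm_ring_1 \<Rightarrow> 'r"
  assumes k: "khom \<kappa>" and Ld: "\<And>j. der (L j)"
    and TT: "\<And>u v. set u \<subseteq> {..<n} \<times> {..2} \<Longrightarrow> set v \<subseteq> {..<n} \<times> {..2} \<Longrightarrow>
               T u * T v = (\<Sum>w\<in>shuffles u v. T w * of_nat (shuffle_mult u v w))"
  shows "Gs \<kappa> L n T m (f * g) = (\<Sum>a\<in>subs m. Gs \<kappa> L n T a f * Gs \<kappa> L n T (m - a) g)"
proof -
  define op where "op = (\<lambda>w::(nat \<times> nat) list. gword L (map snd w))"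
  define R where "R = (\<lambda>w::(nat \<times> nat) list. \<lambda>I. {..<length w} - I)"
  define Q where "Q = Sigma (Wd n m) (\<lambda>w. Pow {..<length w})"
  define B where "B = Sigma (subs m) (\<lambda>a. Sigma (Wd n a) (\<lambda>u. Sigma (Wd n (m - a))
                       (\<lambda>v. Sigma (shuffles u v) (\<lambda>w. Jset u v w))))"
  have LHS: "Gs \<kappa> L n T m (f * g) = (\<Sum>(w,I)\<in>Q. \<kappa> (T w) * (op (nths w I) f * op (nths w (R w I)) g))"
  proof -
    have "Gs \<kappa> L n T m (f * g) = (\<Sum>w\<in>Wd n m. \<Sum>I\<in>Pow {..<length w}. \<kappa> (T w) * (op (nths w I) f * op (nths w (R w I)) g))"
      unfolding Gs_def op_def R_def
      by (simp add: gword_leib[OF Ld] nths_map sum_distrib_left)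
    also have "\<dots> = (\<Sum>(w,I)\<in>Q. \<kappa> (T w) * (op (nths w I) f * op (nths w (R w I)) g))"
      unfolding Q_def by (rule sum.Sigma) auto
    finally show ?thesis .
  qed
  have RHS: "(\<Sum>a\<in>subs m. Gs \<kappa> L n T a f * Gs \<kappa> L n T (m - a) g)
     = (\<Sum>(a,u,v,w,I)\<in>B. \<kappa> (T w) * (op u f * op v g))"
  proof -
    have step: "\<kappa> (T u) * op u f * (\<kappa> (T v) * op v g)
        = (\<Sum>w\<in>shuffles u v. \<Sum>I\<in>Jset u v w. \<kappa> (T w) * (op u f * op v g))"
      if u: "u \<in> Wd n a" and v: "v \<in> Wd n b" for u v a b
    proof -
      have su: "set u \<subseteq> {..<n} \<times> {..2}" and sv: "set v \<subseteq> {..<n} \<times> {..2}"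
        using u v by (auto simp: Wd_def)
      have "\<kappa> (T u) * op u f * (\<kappa> (T v) * op v g) = \<kappa> (T u * T v) * (op u f * op v g)"
        by (simp add: khom_simps[OF k] algebra_simps)
      also have "\<dots> = (\<Sum>w\<in>shuffles u v. \<kappa> (T w) * of_nat (card (Jset u v w)) * (op u f * op v g))"
        unfolding TT[OF su sv] kappa_sum[OF k] shuffle_mult_Jset
        by (simp add: khom_simps[OF k] kappa_of_nat[OF k] sum_distrib_right)
      also have "\<dots> = (\<Sum>w\<in>shuffles u v. \<Sum>I\<in>Jset u v w. \<kappa> (T w) * (op u f * op v g))"
        by (simp add: algebra_simps)
      finally show ?thesis .
    qed
    have "(\<Sum>a\<in>subs m. Gs \<kappa> L n T a f * Gs \<kappa> L n T (m - a) g)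
       = (\<Sum>a\<in>subs m. \<Sum>u\<in>Wd n a. \<Sum>v\<in>Wd n (m - a). \<kappa> (T u) * op u f * (\<kappa> (T v) * op v g))"
      unfolding Gs_def op_def by (simp add: sum_product)
    also have "\<dots> = (\<Sum>a\<in>subs m. \<Sum>u\<in>Wd n a. \<Sum>v\<in>Wd n (m - a). \<Sum>w\<in>shuffles u v. \<Sum>I\<in>Jset u v w.
                      \<kappa> (T w) * (op u f * op v g))"
      by (intro sum.cong refl step) auto
    also have "\<dots> = (\<Sum>(a,u,v,w,I)\<in>B. \<kappa> (T w) * (op u f * op v g))"
      unfolding B_def by (rule sum_Sigma5) auto
    finally show ?thesis .
  qed
  have BQ: "(\<Sum>(a,u,v,w,I)\<in>B. \<kappa> (T w) * (op u f * op v g))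
      = (\<Sum>(w,I)\<in>Q. \<kappa> (T w) * (op (nths w I) f * op (nths w (R w I)) g))"
  proof (rule sum.reindex_bij_witness[where j="\<lambda>(a,u,v,w,I). (w,I)"
        and i="\<lambda>(w,I). (mset (map fst (nths w I)), nths w I, nths w (R w I), w, I)"])
    fix x assume x: "x \<in> B"
    then obtain a u v w I where xe: "x = (a,u,v,w,I)" and a: "a \<in> subs m" and u: "u \<in> Wd n a"
      and v: "v \<in> Wd n (m - a)" and w: "w \<in> shuffles u v" and I: "I \<in> Jset u v w"
      unfolding B_def by auto
    have Iu: "nths w I = u" and Iv: "nths w (R w I) = v" and Isub: "I \<subseteq> {..<length w}"
      using I by (auto simp: Jset_def R_def)
    have au: "mset (map fst u) = a" using u by (simp add: Wd_def)
    show "(case case x of (a, u, v, w, I) \<Rightarrow> (w, I) of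
           (w, I) \<Rightarrow> (mset (map fst (nths w I)), nths w I, nths w (R w I), w, I)) = x"
      using xe Iu Iv au by simp
    have sw: "set w \<subseteq> {..<n} \<times> {..2}" using set_shuffles[OF w] u v by (auto simp: Wd_def)
    have "mset (map fst w) = mset (map fst u) + mset (map fst v)"
      using mset_shuffles[OF w] by (metis mset_map image_mset_union)
    also have "\<dots> = m" using u v a by (simp add: Wd_def subs_def subset_mset.add_diff_inverse)
    finally have "w \<in> Wd n m" using sw by (simp add: Wd_def)
    then show "(case x of (a, u, v, w, I) \<Rightarrow> (w, I)) \<in> Q" using xe Isub by (simp add: Q_def)
    show "(case case x of (a, u, v, w, I) \<Rightarrow> (w, I) of
           (w, I) \<Rightarrow> \<kappa> (T w) * (op (nths w I) f * op (nths w (R w I)) g)) =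
          (case x of (a, u, v, w, I) \<Rightarrow> \<kappa> (T w) * (op u f * op v g))"
      using xe Iu Iv by simp
  next
    fix y assume y: "y \<in> Q"
    then obtain w I where ye: "y = (w,I)" and w: "w \<in> Wd n m" and Isub: "I \<subseteq> {..<length w}"
      unfolding Q_def by auto
    let ?u = "nths w I" and ?v = "nths w (R w I)" and ?a = "mset (map fst (nths w I))"
    show "(case case y of (w, I) \<Rightarrow> (mset (map fst (nths w I)), nths w I, nths w (R w I), w, I) of
           (a, u, v, w, I) \<Rightarrow> (w, I)) = y" using ye by simp
    have sw: "set w \<subseteq> {..<n} \<times> {..2}" and mw: "mset (map fst w) = m" using w by (auto simp: Wd_def)
    have split: "?a + mset (map fst ?v) = m"
      using mset_nths_split[of "map fst w" I] mw by (simp add: nths_map R_def)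
    have "?a \<in> subs m" using split by (auto simp: subs_def)
    moreover have "?u \<in> Wd n ?a" using sw set_nths_subset[of w I] by (auto simp: Wd_def)
    moreover have "?v \<in> Wd n (m - ?a)"
      using sw set_nths_subset[of w "R w I"] split by (auto simp: Wd_def)
    moreover have "w \<in> shuffles ?u ?v" by (rule nths_shuffles) (simp_all add: R_def)
    moreover have "I \<in> Jset ?u ?v w"
      using Isub length_nths_sub[OF Isub] by (simp add: Jset_def R_def)
    ultimately show "(case y of (w, I) \<Rightarrow> (mset (map fst (nths w I)), nths w I, nths w (R w I), w, I)) \<in> B"
      using ye unfolding B_def by simp
  qed
  show ?thesis using LHS RHS BQ by simp
qed



lemma Wd_empty: "Wd n {#} = {[]}"
  by (auto simp: Wd_def)

lemma Gs_empty: "khom \<kappa> \<Longrightarrow> T [] = 1 \<Longrightarrow> Gs \<kappa> L n T {#} = id"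
  by (rule ext) (simp add: Gs_def Wd_empty khom_simps)

lemma gword_addv: "(\<And>j. addv (L j)) \<Longrightarrow> addv (gword L js)"
  by (induction js) (auto simp: addv_def)

lemma gword_klin: "(\<And>j. klin \<kappa> (L j)) \<Longrightarrow> klin \<kappa> (gword L js)"
  by (induction js) (auto simp: klin_def)

lemma gword_mob:
  fixes L :: "nat \<Rightarrow> 'r::idom \<Rightarrow> 'r"
  assumes Dn: "Dn \<noteq> 0" and Ld: "\<And>j. j \<le> 2 \<Longrightarrow> der (L j)" and Lm: "\<And>j. j \<le> 2 \<Longrightarrow> mob N Dn (L j)"
  shows "set js \<subseteq> {..2} \<Longrightarrow> mob N Dn (gword L js)"
proof (induction js)
  case Nil then show ?case by (simp add: mob_def)
next
  case (Cons j js)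
  then have j: "j \<le> 2" and js: "set js \<subseteq> {..2}" by auto
  have "mob N Dn (\<lambda>q. L j (gword L js q))" by (rule mob_comp[OF Dn Ld[OF j] Lm[OF j] Cons.IH[OF js]])
  then show ?case by (simp add: o_def)
qed

lemma Gs_addv: "(\<And>j. addv (L j)) \<Longrightarrow> addv (Gs \<kappa> L n T m)"
  unfolding Gs_def using gword_addv[of L] by (simp add: addv_def sum.distrib algebra_simps)

lemma Gs_klin: "(\<And>j. klin \<kappa> (L j)) \<Longrightarrow> klin \<kappa> (Gs \<kappa> L n T m)"
  unfolding Gs_def using gword_klin[of \<kappa> L] by (simp add: klin_def sum_distrib_left algebra_simps)

lemma Gs_mob:
  fixes L :: "nat \<Rightarrow> 'r::idom \<Rightarrow> 'r"
  assumes Dn: "Dn \<noteq> 0" and Ld: "\<And>j. j \<le> 2 \<Longrightarrow> der (L j)" and Lm: "\<And>j. j \<le> 2 \<Longrightarrow> mob N Dn (L j)"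
  shows "mob N Dn (Gs \<kappa> L n T m)"
  unfolding Gs_def
  by (rule mob_sum[where F="\<lambda>iw q. \<kappa> (T iw) * gword L (map snd iw) q"], rule mob_cmul, rule gword_mob[OF Dn Ld Lm])
     (auto simp: Wd_def)

definition hadd :: "('r::ab_group_add \<Rightarrow> 's::ab_group_add) \<Rightarrow> bool" where
  "hadd \<iota> \<longleftrightarrow> (\<forall>x y. \<iota> (x + y) = \<iota> x + \<iota> y)"

lemma hadd_0: "hadd \<iota> \<Longrightarrow> \<iota> 0 = 0"
  unfolding hadd_def by (metis add_cancel_right_right)

lemma hadd_diff: "hadd \<iota> \<Longrightarrow> \<iota> (x - y) = \<iota> x - \<iota> y"
  unfolding hadd_def by (metis add_diff_cancel diff_add_cancel)

lemma hadd_sum: "hadd \<iota> \<Longrightarrow> \<iota> (sum g S) = (\<Sum>s\<in>S. \<iota> (g s))"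
  by (induction S rule: infinite_finite_induct) (simp_all add: hadd_0 hadd_def)

definition intw :: "('r \<Rightarrow> 's) \<Rightarrow> 'r ser \<Rightarrow> 's ser \<Rightarrow> bool" where
  "intw \<iota> F1 F2 \<longleftrightarrow> (\<forall>m x. F2 m (\<iota> x) = \<iota> (F1 m x))"

lemma intw_gmult:
  "hadd \<iota> \<Longrightarrow> intw \<iota> A1 A2 \<Longrightarrow> intw \<iota> B1 B2 \<Longrightarrow> intw \<iota> (gmult A1 B1) (gmult A2 B2)"
  unfolding intw_def gmult_subs by (simp add: hadd_sum)

lemma intw_gone: "hadd \<iota> \<Longrightarrow> intw \<iota> gone gone"
  unfolding intw_def gone_def by (simp add: hadd_0)

lemma intw_gpow: "hadd \<iota> \<Longrightarrow> intw \<iota> X1 X2 \<Longrightarrow> intw \<iota> (gpow X1 k) (gpow X2 k)"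
  by (induction k) (simp_all add: intw_gone intw_gmult)

lemma intw_gexp:
  assumes h: "hadd \<iota>" and kk: "\<And>c x. \<iota> (ka c * x) = kb c * \<iota> x" and X: "intw \<iota> X1 X2"
  shows "intw \<iota> (gexp ka X1) (gexp kb X2)"
  using intw_gpow[OF h X] unfolding intw_def gexp_def by (simp add: hadd_sum[OF h] kk)

lemma intw_gX:
  assumes h: "hadd \<iota>" and kk: "\<And>c x. \<iota> (ka c * x) = kb c * \<iota> x" and G: "intw \<iota> GA GB"
  shows "intw \<iota> (gX ka GA k) (gX kb GB k)"
proof (induction k)
  case 0 then show ?case by (simp add: intw_def hadd_0[OF h])
next
  case (Suc k)
  have E: "intw \<iota> (gexp ka (gX ka GA k)) (gexp kb (gX kb GB k))" by (rule intw_gexp[OF h kk Suc])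
  show ?case using Suc E G unfolding intw_def by (simp add: hadd_diff[OF h])
qed

lemma intw_Xfin:
  assumes h: "hadd \<iota>" and kk: "\<And>c x. \<iota> (ka c * x) = kb c * \<iota> x" and G: "intw \<iota> GA GB"
  shows "intw \<iota> (Xfin ka GA) (Xfin kb GB)"
proof -
  have "intw \<iota> (gX ka GA k) (gX kb GB k)" for k by (rule intw_gX[where ka=ka and kb=kb, OF h kk G])
  then show ?thesis unfolding intw_def Xfin_def by blast
qed

lemma intw_Gs:
  assumes h: "hadd \<iota>" and kk: "\<And>c x. \<iota> (ka c * x) = kb c * \<iota> x"
    and L: "\<And>j x. LB j (\<iota> x) = \<iota> (LA j x)"
  shows "intw \<iota> (Gs ka LA n T) (Gs kb LB n T)"
proof -
  have W: "gword LB js (\<iota> x) = \<iota> (gword LA js x)" for js x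
    by (induction js arbitrary: x) (simp_all add: L)
  show ?thesis unfolding intw_def Gs_def by (simp add: hadd_sum[OF h] kk W)
qed

lemma grouplike_T:
  fixes S :: "('b \<times> nat) list \<Rightarrow> complex" and h :: "nat \<Rightarrow> 'b"
  assumes gl: "grouplike S" and inj: "inj_on h {..<n}"
    and u: "set u \<subseteq> {..<n} \<times> {..2}" and v: "set v \<subseteq> {..<n} \<times> {..2}"
  defines "T \<equiv> (\<lambda>iw. S (map (\<lambda>(i, j). (h i, j)) iw))"
  shows "T u * T v = (\<Sum>w\<in>shuffles u v. T w * of_nat (shuffle_mult u v w))"
proof -
  let ?f = "\<lambda>(i::nat, j::nat). (h i, j)"
  let ?Al = "{..<n} \<times> {..2::nat}"
  have injf: "inj_on ?f ?Al" using inj by (auto simp: inj_on_def)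
  have sw: "set w \<subseteq> ?Al" if "w \<in> shuffles u v" for w using set_shuffles[OF that] u v by auto
  have injm: "inj_on (map ?f) (shuffles u v)"
  proof (rule inj_onI)
    fix w1 w2 assume w1: "w1 \<in> shuffles u v" and w2: "w2 \<in> shuffles u v" and e: "map ?f w1 = map ?f w2"
    have "inj_on ?f (set w1 \<union> set w2)" using sw[OF w1] sw[OF w2] by (intro inj_on_subset[OF injf]) simp
    then show "w1 = w2" using e inj_on_map_eq_map by blast
  qed
  have mult: "shuffle_mult (map ?f u) (map ?f v) (map ?f w) = shuffle_mult u v w" if w: "w \<in> shuffles u v" for w
  proof -
    have e1: "(map ?f (nths w I) = map ?f u) = (nths w I = u)" for I
    proof -
      have "set (nths w I) \<union> set u \<subseteq> ?Al" using sw[OF w] set_nths_subset[of w I] u by auto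
      then have "inj_on ?f (set (nths w I) \<union> set u)" by (rule inj_on_subset[OF injf])
      then show ?thesis by (rule inj_on_map_eq_map)
    qed
    have e2: "(map ?f (nths w I) = map ?f v) = (nths w I = v)" for I
    proof -
      have "set (nths w I) \<union> set v \<subseteq> ?Al" using sw[OF w] set_nths_subset[of w I] v by auto
      then have "inj_on ?f (set (nths w I) \<union> set v)" by (rule inj_on_subset[OF injf])
      then show ?thesis by (rule inj_on_map_eq_map)
    qed
    show ?thesis unfolding shuffle_mult_def by (simp add: nths_map e1 e2)
  qed
  have "T u * T v = coproduct S (map ?f u, map ?f v)"
    using gl unfolding grouplike_def T_def by simp
  also have "\<dots> = (\<Sum>w'\<in>map ?f ` shuffles u v. S w' * of_nat (shuffle_mult (map ?f u) (map ?f v) w'))"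
    unfolding coproduct_def by (simp add: shuffles_map)
  also have "\<dots> = (\<Sum>w\<in>shuffles u v. S (map ?f w) * of_nat (shuffle_mult (map ?f u) (map ?f v) (map ?f w)))"
    by (rule sum.reindex[OF injm, unfolded o_def])
  also have "\<dots> = (\<Sum>w\<in>shuffles u v. T w * of_nat (shuffle_mult u v w))"
    by (rule sum.cong[OF refl]) (simp add: mult T_def)
  finally show ?thesis .
qed

lemma ps_pow_gpow: "ps_pow X k = gpow X k"
  by (induction k) (simp_all add: ps_one_def gone_def ps_mult_def gmult_def)

lemma smult_const: "smult c p = [:c:] * p"
  by simp

lemma ps_exp_gexp: "ps_exp X = gexp (\<lambda>c. [:c:]) X"
  by (rule ext)+ (simp add: ps_exp_def gexp_def ps_pow_gpow)

lemma Dmap_Gs: "Dmap n h S = Gs (\<lambda>c. [:c:]) letter_op n (\<lambda>iw. S (map (\<lambda>(i, j). (h i, j)) iw))"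
  by (rule ext)+ (simp add: Dmap_def Gs_def Wd_def word_op_gword)



definition rhom :: "('b::comm_ring_1 \<Rightarrow> 'a::comm_ring_1) \<Rightarrow> bool" where
  "rhom K \<longleftrightarrow> (\<forall>x y. K (x + y) = K x + K y) \<and> (\<forall>x y. K (x * y) = K x * K y) \<and> K 1 = 1"

lemma rhom_0: "rhom K \<Longrightarrow> K 0 = 0"
  unfolding rhom_def by (metis add_cancel_right_right)

lemma rhom_simps:
  assumes "rhom K"
  shows "K (x + y) = K x + K y" "K (x * y) = K x * K y" "K 1 = 1" "K 0 = 0"
    "K (x - y) = K x - K y" "K (of_nat n) = of_nat n" "K (x ^ k) = K x ^ k"
proof -
  show a: "K (x + y) = K x + K y" and b: "K (x * y) = K x * K y" and c: "K 1 = 1"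
    using assms by (auto simp: rhom_def)
  show d: "K 0 = 0" using assms by (rule rhom_0)
  have "K (x - y) + K y = K x" using assms unfolding rhom_def by (metis diff_add_cancel)
  then show "K (x - y) = K x - K y" by (simp add: eq_diff_eq)
  have A: "\<And>x y. K (x + y) = K x + K y" using assms by (simp add: rhom_def)
  show "K (of_nat n) = of_nat n" by (induction n) (simp_all add: d c A)
  have M: "\<And>x y. K (x * y) = K x * K y" using assms by (simp add: rhom_def)
  show "K (x ^ k) = K x ^ k" by (induction k) (simp_all add: c M)
qed

lemma rhom_sum: "rhom K \<Longrightarrow> K (sum f S) = (\<Sum>s\<in>S. K (f s))"
  by (induction S rule: infinite_finite_induct) (simp_all add: rhom_simps)

lemma coeff_map_poly_rhom: "rhom K \<Longrightarrow> coeff (map_poly K p) n = K (coeff p n)"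
  by (simp add: coeff_map_poly rhom_0)

lemma map_poly_rhom_add: "rhom K \<Longrightarrow> map_poly K (p + q) = map_poly K p + map_poly K q"
  by (rule poly_eqI) (simp add: coeff_map_poly_rhom rhom_simps)

lemma map_poly_rhom_mult: "rhom K \<Longrightarrow> map_poly K (p * q) = map_poly K p * map_poly K q"
proof (rule poly_eqI)
  fix n assume K: "rhom K"
  have "K (\<Sum>i\<le>n. coeff p i * coeff q (n - i)) = (\<Sum>i\<le>n. K (coeff p i) * K (coeff q (n - i)))"
    by (simp add: rhom_sum[OF K] rhom_simps[OF K])
  then show "coeff (map_poly K (p * q)) n = coeff (map_poly K p * map_poly K q) n"
    by (simp add: coeff_mult coeff_map_poly_rhom[OF K])
qed

lemma rhom_map_poly: "rhom K \<Longrightarrow> rhom (map_poly K)"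
  unfolding rhom_def using map_poly_rhom_add[of K] map_poly_rhom_mult[of K]
  by (simp add: rhom_def)

lemma pderiv_map_poly_rhom:
  fixes K :: "'b::idom \<Rightarrow> 'a::idom"
  shows "rhom K \<Longrightarrow> pderiv (map_poly K p) = map_poly K (pderiv p)"
  by (rule poly_eqI) (simp add: coeff_pderiv coeff_map_poly_rhom rhom_simps)

lemma poly_map_poly_rhom: "rhom K \<Longrightarrow> poly (map_poly K p) (K c) = K (poly p c)"
  by (induction p) (simp_all add: map_poly_pCons rhom_simps rhom_0)

lemma rhom_const: "rhom (\<lambda>c. [:c:])"
  by (simp add: rhom_def one_pCons)

lemma rhom_comp: "rhom K \<Longrightarrow> rhom K' \<Longrightarrow> rhom (\<lambda>x. K (K' x))"
  by (simp add: rhom_def)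

definition liftL :: "('a::idom \<Rightarrow> 'a) \<Rightarrow> nat \<Rightarrow> 'a poly \<Rightarrow> 'a poly" where
  "liftL d j P = map_poly d P + monom 1 j * pderiv P"

lemma map_poly_der_add: "der d \<Longrightarrow> map_poly d (p + q) = map_poly d p + map_poly d q"
  by (rule poly_eqI) (simp add: coeff_map_poly der_def addv_0 addv_def)

lemma map_poly_der_mult:
  fixes d :: "'a::idom \<Rightarrow> 'a"
  assumes "der d"
  shows "map_poly d (p * q) = map_poly d p * q + p * map_poly d q"
proof (rule poly_eqI)
  fix n
  have d0: "d 0 = 0" using assms by (simp add: der_def addv_0)
  have "d (\<Sum>i\<le>n. coeff p i * coeff q (n - i)) = (\<Sum>i\<le>n. d (coeff p i) * coeff q (n - i) + coeff p i * d (coeff q (n - i)))"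
    using assms by (simp add: der_def addv_sum)
  then show "coeff (map_poly d (p * q)) n = coeff (map_poly d p * q + p * map_poly d q) n"
    by (simp add: coeff_mult coeff_map_poly d0 sum.distrib)
qed

lemma der_liftL: "der d \<Longrightarrow> der (liftL d j)"
  unfolding der_def[of "liftL d j"] addv_def liftL_def
  by (simp add: map_poly_der_add map_poly_der_mult pderiv_add pderiv_mult algebra_simps)

lemma liftL_const: "der d \<Longrightarrow> liftL d j [:c:] = [:d c:]"
  by (simp add: liftL_def der_def addv_0 map_poly_pCons)

lemma liftL_map_poly:
  fixes K :: "complex \<Rightarrow> 'a::idom"
  assumes K: "rhom K" and dK: "\<And>c. d (K c) = 0" and d: "der d"
  shows "liftL d j (map_poly K q) = map_poly K (monom 1 j * pderiv q)"
proof -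
  have d0: "d 0 = 0" using d by (simp add: der_def addv_0)
  have "map_poly d (map_poly K q) = 0"
    by (rule poly_eqI) (simp add: coeff_map_poly d0 rhom_0[OF K] dK)
  moreover have "map_poly K (monom 1 j) = monom 1 j"
    by (simp add: map_poly_monom rhom_0[OF K] rhom_simps[OF K])
  ultimately show ?thesis
    by (simp add: liftL_def pderiv_map_poly_rhom[OF K] map_poly_rhom_mult[OF K])
qed



definition K1 :: "complex \<Rightarrow> complex poly" where "K1 c = [:c:]"
definition K2 :: "complex \<Rightarrow> complex poly poly" where "K2 c = [:[:c:]:]"
definition K3 :: "complex \<Rightarrow> complex poly poly poly" where "K3 c = [:[:[:c:]:]:]"
definition K4 :: "complex \<Rightarrow> complex poly poly poly poly" where "K4 c = [:[:[:[:c:]:]:]:]"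

lemma rhom_K: "rhom K1" "rhom K2" "rhom K3" "rhom K4"
  unfolding K1_def K2_def K3_def K4_def
  using rhom_const rhom_comp by (auto simp: rhom_def one_pCons)

lemma khom_rhom: "rhom K \<Longrightarrow> khom K"
  by (simp add: rhom_def khom_def)

definition L2 :: "nat \<Rightarrow> complex poly poly \<Rightarrow> complex poly poly" where "L2 j = liftL (letter_op j) j"
definition L3 :: "nat \<Rightarrow> complex poly poly poly \<Rightarrow> complex poly poly poly" where "L3 j = liftL (L2 j) j"
definition L4 :: "nat \<Rightarrow> complex poly poly poly poly \<Rightarrow> complex poly poly poly poly" where "L4 j = liftL (L3 j) j"

lemma letter_op_liftL: "letter_op j = liftL (\<lambda>_. 0) j"
proof (rule ext)
  fix P :: "complex poly"
  have "map_poly (\<lambda>_. 0::complex) P = 0" by (rule poly_eqI) (simp add: coeff_map_poly)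
  then show "letter_op j P = liftL (\<lambda>_. 0) j P" by (simp add: letter_op_def liftL_def)
qed

lemma der_letters: "der (letter_op j)" "der (L2 j)" "der (L3 j)" "der (L4 j)"
proof -
  have "der (\<lambda>_::complex. 0)" by (simp add: der_def addv_def)
  then show 1: "der (letter_op j)" unfolding letter_op_liftL by (rule der_liftL)
  then show 2: "der (L2 j)" unfolding L2_def by (rule der_liftL)
  then show 3: "der (L3 j)" unfolding L3_def by (rule der_liftL)
  then show "der (L4 j)" unfolding L4_def by (rule der_liftL)
qed

lemma letter_op_const: "letter_op j [:c:] = 0"
  by (simp add: letter_op_def)

definition i1 :: "complex poly \<Rightarrow> complex poly poly poly poly" where "i1 q = [:[:[:q:]:]:]"
definition i2 :: "complex poly \<Rightarrow> complex poly poly poly poly" where "i2 q = [:[:map_poly K1 q:]:]"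
definition i3 :: "complex poly \<Rightarrow> complex poly poly poly poly" where "i3 q = [:map_poly K2 q:]"
definition i4 :: "complex poly \<Rightarrow> complex poly poly poly poly" where "i4 q = map_poly K3 q"

lemma rhom_i: "rhom i1" "rhom i2" "rhom i3" "rhom i4"
proof -
  have c: "rhom (\<lambda>c::'a::comm_ring_1. [:c:])" by (rule rhom_const)
  have c2: "rhom (\<lambda>x::'a::comm_ring_1. [:[:x:]:])" using rhom_comp[OF c c] .
  have c3: "rhom (\<lambda>x::'a::comm_ring_1. [:[:[:x:]:]:])" using rhom_comp[OF c c2] .
  show "rhom i1" unfolding i1_def by (rule c3)
  show "rhom i2" unfolding i2_def by (rule rhom_comp[OF c2 rhom_map_poly[OF rhom_K(1)]])
  show "rhom i3" unfolding i3_def by (rule rhom_comp[OF c rhom_map_poly[OF rhom_K(2)]])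
  show "rhom i4" unfolding i4_def by (rule rhom_map_poly[OF rhom_K(3)])
qed

lemma L2_K2: "L2 j (K2 c) = 0"
  unfolding K2_def L2_def by (simp add: liftL_const der_letters letter_op_const)

lemma L3_K3: "L3 j (K3 c) = 0"
  unfolding K3_def L3_def using L2_K2[of j c] by (simp add: liftL_const der_letters K2_def)

lemma intertwine_i:
  "L4 j (i1 q) = i1 (letter_op j q)" "L4 j (i2 q) = i2 (letter_op j q)"
  "L4 j (i3 q) = i3 (letter_op j q)" "L4 j (i4 q) = i4 (letter_op j q)"
proof -
  show "L4 j (i1 q) = i1 (letter_op j q)"
    using liftL_const[OF der_letters(3)[of j], of j "[:[:q:]:]"] liftL_const[OF der_letters(2)[of j], of j "[:q:]"]
      liftL_const[OF der_letters(1)[of j], of j q]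
    by (simp add: i1_def L4_def L3_def L2_def)
  have "liftL (letter_op j) j (map_poly K1 q) = map_poly K1 (monom 1 j * pderiv q)"
    by (rule liftL_map_poly[OF rhom_K(1)]) (simp_all add: K1_def letter_op_const der_letters)
  then have "L2 j (map_poly K1 q) = map_poly K1 (letter_op j q)"
    by (simp add: L2_def letter_op_def)
  moreover have "L4 j [:[:X:]:] = [:[:L2 j X:]:]" for X
    using liftL_const[OF der_letters(3)[of j], of j "[:X:]"] liftL_const[OF der_letters(2)[of j], of j X]
    by (simp add: L4_def L3_def)
  ultimately show "L4 j (i2 q) = i2 (letter_op j q)" by (simp add: i2_def)
  have "L3 j (map_poly K2 q) = map_poly K2 (letter_op j q)"
    unfolding L3_def letter_op_def
    by (rule liftL_map_poly[OF rhom_K(2)]) (simp_all add: L2_K2 der_letters)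
  moreover have "L4 j [:X:] = [:L3 j X:]" for X
    using liftL_const[OF der_letters(3)[of j], of j X] by (simp add: L4_def)
  ultimately show "L4 j (i3 q) = i3 (letter_op j q)" by (simp add: i3_def)
  show "L4 j (i4 q) = i4 (letter_op j q)"
    unfolding L4_def i4_def letter_op_def
    by (rule liftL_map_poly[OF rhom_K(3)]) (simp_all add: L3_K3 der_letters)
qed

lemma i_K1:
  "i1 (K1 c) = K4 c" "i2 (K1 c) = K4 c" "i3 (K1 c) = K4 c" "i4 (K1 c) = K4 c"
  by (simp_all add: i1_def i2_def i3_def i4_def K1_def K2_def K3_def K4_def map_poly_pCons)



lemma mob_letter:
  fixes L :: "'r::comm_ring_1 \<Rightarrow> 'r"
  assumes d: "der L" and j: "j \<le> 2"
    and e1: "L x1 = x1 ^ j" and e2: "L x2 = x2 ^ j" and e3: "L x3 = x3 ^ j" and e4: "L x4 = x4 ^ j"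
  shows "mob ((x1 - x3) * (x2 - x4)) ((x2 - x3) * (x1 - x4)) L"
proof -
  have a: "addv L" using d by (rule der_addv)
  have LN: "L ((x1 - x3) * (x2 - x4)) = (x1 ^ j - x3 ^ j) * (x2 - x4) + (x1 - x3) * (x2 ^ j - x4 ^ j)"
    by (simp add: der_mult[OF d] addv_diff[OF a] e1 e2 e3 e4)
  have LD: "L ((x2 - x3) * (x1 - x4)) = (x2 ^ j - x3 ^ j) * (x1 - x4) + (x2 - x3) * (x1 ^ j - x4 ^ j)"
    by (simp add: der_mult[OF d] addv_diff[OF a] e1 e2 e3 e4)
  have "j = 0 \<or> j = 1 \<or> j = 2" using j by auto
  then show ?thesis
  proof (elim disjE)
    assume "j = 0" then show ?thesis unfolding mob_def LN LD by simp
  next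
    assume j1: "j = 1" show ?thesis unfolding mob_def LN LD j1 power_one_right by (simp add: algebra_simps)
  next
    assume j2: "j = 2" show ?thesis unfolding mob_def LN LD j2 power2_eq_square by (simp add: algebra_simps)
  qed
qed

definition sg :: "complex poly poly poly poly \<Rightarrow> complex poly" where
  "sg P = poly (poly (poly P (K3 2)) (K2 1)) (K1 0)"

lemma rhom_sg: "rhom sg"
  by (simp add: rhom_def sg_def)

lemma sg_i:
  "sg (i1 q) = q" "sg (i2 q) = [:poly q 0:]" "sg (i3 q) = [:poly q 1:]" "sg (i4 q) = [:poly q 2:]"
proof -
  show "sg (i1 q) = q" by (simp add: sg_def i1_def)
  show "sg (i2 q) = [:poly q 0:]"
    using poly_map_poly_rhom[OF rhom_K(1), of q 0] by (simp add: sg_def i2_def K1_def)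
  show "sg (i3 q) = [:poly q 1:]"
    using poly_map_poly_rhom[OF rhom_K(2), of q 1] by (simp add: sg_def i3_def K2_def K1_def)
  show "sg (i4 q) = [:poly q 2:]"
    using poly_map_poly_rhom[OF rhom_K(3), of q 2] by (simp add: sg_def i4_def K3_def K2_def K1_def)
qed

definition xx :: "complex poly" where "xx = [:0, 1:]"

definition NN :: "complex poly poly poly poly" where
  "NN = (i1 xx - i3 xx) * (i2 xx - i4 xx)"
definition DD :: "complex poly poly poly poly" where
  "DD = (i2 xx - i3 xx) * (i1 xx - i4 xx)"

lemma DD_nonzero: "DD \<noteq> 0"
proof
  assume "DD = 0"
  then have "sg DD = 0" using rhom_simps(4)[OF rhom_sg] by simp
  moreover have "sg DD = (0 - 1) * (xx - 2)"
    by (simp add: DD_def rhom_simps[OF rhom_sg] sg_i xx_def numeral_poly one_pCons)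
  moreover have "xx - 2 \<noteq> 0"
  proof
    assume "xx - 2 = 0"
    then have "coeff (xx - 2) 1 = 0" by simp
    then show False by (simp add: xx_def numeral_poly)
  qed
  ultimately show False by simp
qed

lemma mob_L4: "j \<le> 2 \<Longrightarrow> mob NN DD (L4 j)"
  unfolding NN_def DD_def
proof (rule mob_letter[OF der_letters(4)])
  have "letter_op j xx = xx ^ j" by (simp add: letter_op_def xx_def monom_altdef pderiv_pCons)
  then show "L4 j (i1 xx) = i1 xx ^ j" "L4 j (i2 xx) = i2 xx ^ j"
    "L4 j (i3 xx) = i3 xx ^ j" "L4 j (i4 xx) = i4 xx ^ j"
    by (simp_all add: intertwine_i rhom_simps[OF rhom_i(1)] rhom_simps[OF rhom_i(2)]
        rhom_simps[OF rhom_i(3)] rhom_simps[OF rhom_i(4)])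
qed

lemma der_poly_form:
  fixes D :: "complex poly \<Rightarrow> complex poly"
  assumes d: "der D" and k: "klin K1 D"
  shows "D q = D xx * pderiv q"
proof -
  have a: "addv D" using d by (rule der_addv)
  have "D (1 * 1) = D 1 * 1 + 1 * D 1" by (rule der_mult[OF d])
  then have D1: "D 1 = 0" by simp
  have Dc: "D [:c:] = 0" for c
  proof -
    have "D (K1 c * 1) = K1 c * D 1" using k unfolding klin_def by blast
    then show ?thesis using D1 by (simp add: K1_def)
  qed
  show ?thesis
  proof (induction q)
    case 0 then show ?case by (simp add: addv_0[OF a])
  next
    case (pCons c q)
    have e: "pCons c q = [:c:] + xx * q" by (simp add: xx_def)
    have "D (pCons c q) = D xx * q + xx * D q"
      unfolding e by (simp add: addv_def[THEN iffD1, OF a] der_mult[OF d] Dc)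
    also have "\<dots> = D xx * pderiv (pCons c q)"
      using pCons.IH by (simp add: pderiv_pCons xx_def algebra_simps)
    finally show ?case .
  qed
qed

lemma deg_identity:
  fixes p B2 B3 B4 :: "complex poly"
  assumes E: "((p - B3) * (0 - 2) + (xx - 1) * (B2 - B4)) * ((0 - 1) * (xx - 2))
            = ((xx - 1) * (0 - 2)) * ((B2 - B3) * (xx - 2) + (0 - 1) * (p - B4))"
    and b: "degree B2 = 0" "degree B3 = 0" "degree B4 = 0"
  shows "degree p \<le> 2"
proof -
  let ?Q = "2 * B3 * (xx - 2) + (xx - 1) * (xx - 2) * (B2 - B4) - 2 * ((xx - 1) * (xx - 2)) * (B2 - B3) - 2 * (xx - 1) * B4"
  have pq: "2 * p = - ?Q" using E by algebra
  have dm: "degree (a * c) \<le> i + j" if "degree a \<le> i" "degree c \<le> j" for a c :: "complex poly" and i j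
    using degree_mult_le[of a c] that by linarith
  have x1: "degree (xx - 1) \<le> 1" and x2: "degree (xx - 2) \<le> 1"
    by (simp_all add: xx_def numeral_poly one_pCons)
  have two: "degree (2::complex poly) \<le> 0" by simp
  have bd: "degree (B2 - B4) \<le> 0" "degree (B2 - B3) \<le> 0" "degree B3 \<le> 0" "degree B4 \<le> 0"
    using b degree_diff_le[of B2 0 B4] degree_diff_le[of B2 0 B3] by auto
  have xx12: "degree ((xx - 1) * (xx - 2)) \<le> 2" using dm[OF x1 x2] by simp
  have t1: "degree (2 * B3 * (xx - 2)) \<le> 2" using dm[OF dm[OF two bd(3)] x2] by simp
  have t2: "degree ((xx - 1) * (xx - 2) * (B2 - B4)) \<le> 2" using dm[OF xx12 bd(1)] by simp
  have t3: "degree (2 * ((xx - 1) * (xx - 2)) * (B2 - B3)) \<le> 2" using dm[OF dm[OF two xx12] bd(2)] by simp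
  have t4: "degree (2 * (xx - 1) * B4) \<le> 2" using dm[OF dm[OF two x1] bd(4)] by simp
  have "degree ?Q \<le> 2"
    by (intro degree_diff_le degree_add_le t1 t2 t3 t4)
  then have "degree (- ?Q) \<le> 2" by (simp only: degree_minus)
  then have "degree (2 * p) \<le> 2" by (simp only: pq)
  moreover have "degree (2 * p) = degree p"
    by (simp add: numeral_poly)
  ultimately show ?thesis by simp
qed



definition bad :: "nat \<Rightarrow> nat multiset \<Rightarrow> bool" where
  "bad n m \<longleftrightarrow> \<not> set_mset m \<subseteq> {..<n}"

lemma Gs_bad: "bad n m \<Longrightarrow> Gs \<kappa> L n T m q = 0"
proof -
  assume b: "bad n m"
  have "Wd n m = {}"
  proof (rule ccontr)
    assume "Wd n m \<noteq> {}"
    then obtain iw where iw: "set iw \<subseteq> {..<n} \<times> {..2::nat}" "mset (map fst iw) = m" by (auto simp: Wd_def)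
    have "set_mset m \<subseteq> {..<n}"
    proof
      fix x assume "x \<in># m"
      then have "x \<in> set (map fst iw)" using iw(2) by (metis set_mset_mset)
      then obtain b where "(x, b) \<in> set iw" by auto
      then show "x \<in> {..<n}" using iw(1) by auto
    qed
    then show False using b by (simp add: bad_def)
  qed
  then show ?thesis by (simp add: Gs_def)
qed

lemma bad_split: "bad n m \<Longrightarrow> a \<in> subs m \<Longrightarrow> \<not> bad n a \<Longrightarrow> bad n (m - a)"
proof -
  assume b: "bad n m" and a: "a \<in> subs m" and na: "\<not> bad n a"
  then obtain x where x: "x \<in># m" "x \<notin> {..<n}" by (auto simp: bad_def)
  then have "x \<notin># a" using na by (auto simp: bad_def)
  then have "x \<in># m - a" using x(1) by (simp add: in_diff_count not_in_iff)
  then show "bad n (m - a)" using x(2) by (auto simp: bad_def)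
qed

lemma bad_nonempty: "bad n m \<Longrightarrow> m \<noteq> {#}"
  by (auto simp: bad_def)

lemma gpow_bad:
  assumes Ya: "\<And>m. addv (Y m)" and Yb: "\<And>m. bad n m \<Longrightarrow> Y m = (\<lambda>q. 0)"
  shows "bad n m \<Longrightarrow> gpow Y k m q = 0"
proof (induction k arbitrary: m q)
  case 0 then show ?case by (simp add: gone_def bad_nonempty)
next
  case (Suc k)
  have "gpow Y (Suc k) m q = (\<Sum>a\<in>subs m. Y a (gpow Y k (m - a) q))" by (simp add: gmult_subs)
  also have "\<dots> = (\<Sum>a\<in>subs m. 0)"
  proof (rule sum.cong[OF refl])
    fix a assume a: "a \<in> subs m"
    show "Y a (gpow Y k (m - a) q) = 0"
    proof (cases "bad n a")
      case True then show ?thesis using Yb by simp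
    next
      case False
      then have "bad n (m - a)" using bad_split[OF Suc.prems a] by simp
      then show ?thesis using Suc.IH addv_0[OF Ya] by simp
    qed
  qed
  finally show ?case by simp
qed

lemma gX_bad:
  assumes Ga: "\<And>m. addv (G m)" and Gb: "\<And>m q. bad n m \<Longrightarrow> G m q = 0"
  shows "bad n m \<Longrightarrow> gX \<kappa> G k m = (\<lambda>q. 0)"
proof (induction k arbitrary: m)
  case 0 then show ?case by simp
next
  case (Suc k)
  have "gexp \<kappa> (gX \<kappa> G k) m q = 0" for q
    unfolding gexp_def using gpow_bad[OF gX_add[OF Ga] Suc.IH Suc.prems] by simp
  then show ?case using Suc Gb by auto
qed

lemma Xfin_bad:
  assumes Ga: "\<And>m. addv (G m)" and Gb: "\<And>m q. bad n m \<Longrightarrow> G m q = 0"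
  shows "bad n m \<Longrightarrow> Xfin \<kappa> G m = (\<lambda>q. 0)"
  unfolding Xfin_def by (rule gX_bad[OF Ga Gb])



lemma rhom_hadd: "rhom K \<Longrightarrow> hadd K"
  by (simp add: rhom_def hadd_def)

lemma K1_eq: "K1 = (\<lambda>c. [:c:])"
  by (rule ext) (simp add: K1_def)

lemma letter_op_klin: "klin K1 (letter_op j)"
  by (simp add: klin_def letter_op_def K1_def pderiv_smult algebra_simps)

lemma der_diff_prod:
  assumes d: "der X"
  shows "X ((a - b) * (c - e)) = (X a - X b) * (c - e) + (a - b) * (X c - X e)"
  using der_mult[OF d] addv_diff[OF der_addv[OF d]] by simp

theorem lemma4p7:
  fixes wt :: "'b \<Rightarrow> nat" and B :: "'b set" and n :: nat and h :: "nat \<Rightarrow> 'b"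
    and S :: "('b \<times> nat) list \<Rightarrow> complex"
  assumes "inj_on h {..<n}" and "h ` {..<n} \<subseteq> B" and "\<forall>i<n. wt (h i) = 4"
    and "in_series_algebra wt B S" and "grouplike S"
  shows "Dmap n h S \<in> D0 n"
proof -
  define T where "T = (\<lambda>iw. S (map (\<lambda>(i, j). (h i, j)) iw))"
  define G1 where "G1 = Gs K1 letter_op n T"
  define G4 where "G4 = Gs K4 L4 n T"
  define X1 where "X1 = Xfin K1 G1"
  define X4 where "X4 = Xfin K4 G4"
  have k1: "khom K1" and k4: "khom K4" using rhom_K khom_rhom by auto
  have T0: "T [] = 1" using assms(5) by (simp add: T_def grouplike_def)
  have TT: "\<And>u v. set u \<subseteq> {..<n} \<times> {..2} \<Longrightarrow> set v \<subseteq> {..<n} \<times> {..2} \<Longrightarrow>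
      T u * T v = (\<Sum>w\<in>shuffles u v. T w * of_nat (shuffle_mult u v w))"
    unfolding T_def by (rule grouplike_T[OF assms(5) assms(1)])
  have DG: "Dmap n h S = G1" unfolding G1_def T_def K1_eq by (rule Dmap_Gs)
  have G10: "G1 {#} = id" unfolding G1_def by (rule Gs_empty[where T=T, OF k1 T0])
  have G1a: "\<And>m. addv (G1 m)" unfolding G1_def by (rule Gs_addv) (rule der_addv[OF der_letters(1)])
  have G1k: "\<And>m. klin K1 (G1 m)" unfolding G1_def by (rule Gs_klin) (rule letter_op_klin)
  have G1b: "\<And>m q. bad n m \<Longrightarrow> G1 m q = 0" unfolding G1_def by (rule Gs_bad)
  have G40: "G4 {#} = id" unfolding G4_def by (rule Gs_empty[where T=T, OF k4 T0])
  have G4a: "\<And>m. addv (G4 m)" unfolding G4_def by (rule Gs_addv) (rule der_addv[OF der_letters(4)])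
  have G4mul: "\<And>m f g. G4 m (f * g) = (\<Sum>a\<in>subs m. G4 a f * G4 (m - a) g)"
    unfolding G4_def by (rule Gs_mult[where T=T, OF k4 der_letters(4) TT])
  have G4mob: "\<And>m. mob NN DD (G4 m)"
    unfolding G4_def by (rule Gs_mob[OF DD_nonzero der_letters(4) mob_L4])
  have kk: "i (K1 c * x) = K4 c * i x" if "rhom i" "i (K1 c) = K4 c" for i :: "complex poly \<Rightarrow> complex poly poly poly poly" and c x
    using that by (simp add: rhom_simps)
  have intwX: "intw i X1 X4" if ri: "rhom i" and iK: "\<And>c. i (K1 c) = K4 c"
      and iL: "\<And>j x. L4 j (i x) = i (letter_op j x)" for i
  proof -
    have h: "hadd i" using ri by (rule rhom_hadd)
    have kk': "\<And>c x. i (K1 c * x) = K4 c * i x" using kk[OF ri iK] .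
    have "intw i G1 G4" unfolding G1_def G4_def by (rule intw_Gs[where ka=K1 and kb=K4 and \<iota>=i and LA=letter_op and LB=L4 and T=T and n=n, OF h kk' iL])
    then show ?thesis unfolding X1_def X4_def by (rule intw_Xfin[where ka=K1 and kb=K4 and \<iota>=i and GA=G1 and GB=G4, OF h kk'])
  qed
  have iw1: "intw i1 X1 X4" by (rule intwX[OF rhom_i(1) i_K1(1) intertwine_i(1)])
  have iw2: "intw i2 X1 X4" by (rule intwX[OF rhom_i(2) i_K1(2) intertwine_i(2)])
  have iw3: "intw i3 X1 X4" by (rule intwX[OF rhom_i(3) i_K1(3) intertwine_i(3)])
  have iw4: "intw i4 X1 X4" by (rule intwX[OF rhom_i(4) i_K1(4) intertwine_i(4)])
  have core4: "der (X4 m) \<and> mob NN DD (X4 m)" for m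
    unfolding X4_def by (rule core[where G=G4, OF k4 G40 G4a G4mul G4mob DD_nonzero])
  have i1inj: "i1 a = i1 b \<Longrightarrow> a = b" for a b by (simp add: i1_def)
  have X1d: "der (X1 m)" for m
  proof -
    have a: "addv (X1 m)" unfolding X1_def by (rule Xfin_add[where G=G1, OF G1a])
    have d4: "der (X4 m)" using core4 by blast
    have "X1 m (f * g) = X1 m f * g + f * X1 m g" for f g
    proof (rule i1inj)
      have "i1 (X1 m (f * g)) = X4 m (i1 (f * g))" using iw1 by (simp add: intw_def)
      also have "\<dots> = X4 m (i1 f * i1 g)" by (simp add: rhom_simps[OF rhom_i(1)])
      also have "\<dots> = X4 m (i1 f) * i1 g + i1 f * X4 m (i1 g)" by (rule der_mult[OF d4])
      also have "\<dots> = i1 (X1 m f * g + f * X1 m g)"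
        using iw1 by (simp add: intw_def rhom_simps[OF rhom_i(1)])
      finally show "i1 (X1 m (f * g)) = i1 (X1 m f * g + f * X1 m g)" .
    qed
    then show ?thesis using a by (simp add: der_def)
  qed
  have X1k: "klin K1 (X1 m)" for m unfolding X1_def by (rule Xfin_klin[where G=G1, OF k1 G1k])
  have X1d0: "X1 m \<in> d0" for m
  proof -
    define p where "p = X1 m xx"
    have form: "X1 m = (\<lambda>q. p * pderiv q)"
    proof (rule ext)
      fix q show "X1 m q = p * pderiv q" unfolding p_def by (rule der_poly_form[OF X1d X1k])
    qed
    have d4: "der (X4 m)" and M: "X4 m NN * DD = NN * X4 m DD" using core4[of m] by (auto simp: mob_def)
    have e1: "X4 m (i1 xx) = i1 p" using iw1 by (simp add: intw_def p_def)
    have e2: "X4 m (i2 xx) = i2 p" using iw2 by (simp add: intw_def p_def)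
    have e3: "X4 m (i3 xx) = i3 p" using iw3 by (simp add: intw_def p_def)
    have e4: "X4 m (i4 xx) = i4 p" using iw4 by (simp add: intw_def p_def)
    have XN: "X4 m NN = (i1 p - i3 p) * (i2 xx - i4 xx) + (i1 xx - i3 xx) * (i2 p - i4 p)"
      unfolding NN_def der_diff_prod[OF d4] e1 e2 e3 e4 ..
    have XD: "X4 m DD = (i2 p - i3 p) * (i1 xx - i4 xx) + (i2 xx - i3 xx) * (i1 p - i4 p)"
      unfolding DD_def der_diff_prod[OF d4] e1 e2 e3 e4 ..
    have s1: "sg (i1 xx) = xx" and s2: "sg (i2 xx) = 0" and s3: "sg (i3 xx) = 1" and s4: "sg (i4 xx) = 2"
      by (simp_all add: sg_i xx_def one_pCons numeral_poly)
    have M2: "sg (((i1 p - i3 p) * (i2 xx - i4 xx) + (i1 xx - i3 xx) * (i2 p - i4 p)) * ((i2 xx - i3 xx) * (i1 xx - i4 xx)))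
        = sg (((i1 xx - i3 xx) * (i2 xx - i4 xx)) * ((i2 p - i3 p) * (i1 xx - i4 xx) + (i2 xx - i3 xx) * (i1 p - i4 p)))"
      using M unfolding XN XD by (simp only: NN_def DD_def)
    have sp: "sg (i1 p) = p" "sg (i2 p) = [:poly p 0:]" "sg (i3 p) = [:poly p 1:]" "sg (i4 p) = [:poly p 2:]"
      by (rule sg_i)+
    from M2 have E: "((p - [:poly p 1:]) * (0 - 2) + (xx - 1) * ([:poly p 0:] - [:poly p 2:])) * ((0 - 1) * (xx - 2))
            = ((xx - 1) * (0 - 2)) * (([:poly p 0:] - [:poly p 1:]) * (xx - 2) + (0 - 1) * (p - [:poly p 2:]))"
      by (simp only: rhom_simps(2,5)[OF rhom_sg] rhom_simps(1)[OF rhom_sg] s1 s2 s3 s4 sp)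
    have "degree p \<le> 2" by (rule deg_identity[OF E]) simp_all
    then show ?thesis unfolding d0_def form by blast
  qed
  have X1in: "X1 \<in> d0rho n"
    unfolding d0rho_def
  proof (intro CollectI conjI allI impI)
    show "X1 {#} = (\<lambda>q. 0)" unfolding X1_def by (rule Xfin_empty[where G=G1, OF k1 G10])
    show "X1 m \<in> d0" for m by (rule X1d0)
    show "X1 m = (\<lambda>q. 0)" if nm: "\<not> set_mset m \<subseteq> {..<n}" for m
    proof -
      have bm: "bad n m" using nm by (simp add: bad_def)
      show ?thesis unfolding X1_def by (rule Xfin_bad[where G=G1, OF G1a G1b bm])
    qed
  qed
  have PE: "ps_exp X1 = Dmap n h S"
  proof (rule ext, rule ext)
    fix m q
    show "ps_exp X1 m q = Dmap n h S m q"
      unfolding ps_exp_gexp K1_eq[symmetric] DG X1_def by (rule gexp_Xfin[where G=G1, OF k1 G10 G1a])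
  qed
  show ?thesis unfolding D0_def by (rule image_eqI[where f=ps_exp and x=X1, OF PE[symmetric] X1in])
qed


end
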